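(* Let $\Lambda=E_8(-1)^{\oplus 2}\oplus H^{\oplus 3}$ be the K3 lattice, with bilinear form $(\ ,\ )$ extended $\mathbb{C}$-bilinearly to $\Lambda_{\mathbb{C}}=\Lambda\otimes\mathbb{C}$. Let $\varphi_{14}(x)=x^{14}-x^{11}-x^{10}+x^7-x^4-x^3+1$ and let $\delta$ be the root of $\varphi_{14}$ with $\delta\approx -0.9903988352300419-0.13823945592693967\,i$. Then there exist an automorphism $F$ of the lattice $\Lambda$ and an element $\sigma\in\Lambda_{\mathbb{C}}$ such that: (1) the characteristic polynomial of $F$ is $(x-1)^8\varphi_{14}(x)$; (2) $(\sigma,\sigma)=0$ and $(\sigma,\overline{\sigma})>0$; (3) $F(\sigma)=\delta\sigma$ (where $F$ also denotes its $\mathbb{C}$-linear extension).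
   Context: $H$ denotes the even unimodular lattice of signature $(1,1)$ and $E_8(-1)$ the even unimodular negative definite lattice of rank $8$. $\varphi_{14}$ is an irreducible reciprocal (Salem) polynomial; besides its real roots $\alpha_{14}=1.200026\ldots$ and $1/\alpha_{14}$ it has $12$ roots on the unit circle, and $\delta$ is the particular one specified by its approximate value. *)

theory Defs
  imports "Jordan_Normal_Form.Char_Poly" "HOL-Computational_Algebra.Polynomial"
begin

text \<open>Gram matrix of E8(-1): negative of the E8 Cartan matrix. Dynkin diagram:
 chain 0-1-2-3-4-5-6 with node 7 attached to node 2 (arms of length 2, 4, 1).\<close>
definition e8_adj :: "nat \<Rightarrow> nat \<Rightarrow> bool" where
  "e8_adj i j = ((i < 7 \<and> j < 7 \<and> (i = j + 1 \<or> j = i + 1)) \<or> (i = 7 \<and> j = 2) \<or> (i = 2 \<and> j = 7))"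

definition e8m_entry :: "nat \<Rightarrow> nat \<Rightarrow> int" where
  "e8m_entry i j = (if i = j then -2 else if e8_adj i j then 1 else 0)"

text \<open>Gram matrix of the K3 lattice E8(-1)+E8(-1)+H+H+H on Z^22:
 indices 0..7 and 8..15 are the two E8(-1) blocks, 16..21 are three copies of H.\<close>
definition k3_entry :: "nat \<Rightarrow> nat \<Rightarrow> int" where
  "k3_entry i j =
     (if i < 8 \<and> j < 8 then e8m_entry i j
      else if 8 \<le> i \<and> i < 16 \<and> 8 \<le> j \<and> j < 16 then e8m_entry (i - 8) (j - 8)
      else if 16 \<le> i \<and> i < 22 \<and> 16 \<le> j \<and> j < 22 \<and> (i - 16) div 2 = (j - 16) div 2 \<and> i \<noteq> j then 1
      else 0)"

definition K3_gram :: "int mat" where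
  "K3_gram = mat 22 22 (\<lambda>(i, j). k3_entry i j)"

definition K3_aut :: "int mat \<Rightarrow> bool" where
  "K3_aut F \<longleftrightarrow> F \<in> carrier_mat 22 22 \<and> invertible_mat F \<and> transpose_mat F * K3_gram * F = K3_gram"

definition K3_formC :: "complex vec \<Rightarrow> complex vec \<Rightarrow> complex" where
  "K3_formC v w = v \<bullet> (map_mat of_int K3_gram *\<^sub>v w)"

definition phi14 :: "int poly" where
  "phi14 = Poly [1, 0, 0, -1, -1, 0, 0, 1, 0, 0, -1, -1, 0, 0, 1]"

end

theory Submission
  imports Defs
begin


definition mmul :: "'a::comm_ring_1 list list \<Rightarrow> 'a list list \<Rightarrow> 'a list list" where
 "mmul A B = map (\<lambda>r. map (\<lambda>c. sum_list (map2 (*) r c)) (List.transpose B)) A"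

definition wfl :: "nat \<Rightarrow> nat \<Rightarrow> 'a list list \<Rightarrow> bool" where
 "wfl n m A \<longleftrightarrow> length A = n \<and> (\<forall>r\<in>set A. length r = m)"

lemma sum_list_map2_nth:
  assumes "length xs = k" "length ys = k"
  shows "sum_list (map2 (*) xs ys) = (\<Sum>l<k. xs ! l * ys ! l)"
  using assms by (simp add: sum_list_sum_nth atLeast0LessThan)

lemma transpose_wfl:
  assumes "wfl n m B" "n > 0"
  shows "length (List.transpose B) = m" "\<And>j. j < m \<Longrightarrow> List.transpose B ! j = map (\<lambda>r. r ! j) B"
proof -
  from assms obtain r where r: "r \<in> set B" by (cases B) (auto simp: wfl_def)
  have fm: "xs \<noteq> [] \<Longrightarrow> \<forall>x\<in>set xs. x = (m::nat) \<Longrightarrow> foldr max xs 0 = m" for xs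
    apply (induction xs)
     apply simp
    apply (case_tac xs)
     apply (auto simp: max_def)
    done
  have "foldr max (map length B) 0 = m"
    by (rule fm) (use assms r in \<open>auto simp: wfl_def\<close>)
  then show l: "length (List.transpose B) = m" by (simp add: length_transpose foldr_map o_def)
  fix j assume "j < m"
  then show "List.transpose B ! j = map (\<lambda>r. r ! j) B"
    using assms l by (subst nth_transpose) (auto simp: wfl_def intro!: filter_True)
qed

lemma mult_bridge:
  assumes A: "wfl n k A" and B: "wfl k m B" and k: "k > 0"
  shows "mat_of_rows_list k A * mat_of_rows_list m B = mat_of_rows_list m (mmul A B)"
proof (rule eq_matI)
  show "dim_row (mat_of_rows_list k A * mat_of_rows_list m B) = dim_row (mat_of_rows_list m (mmul A B))"
    by (simp add: mat_of_rows_list_def mmul_def)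
  show "dim_col (mat_of_rows_list k A * mat_of_rows_list m B) = dim_col (mat_of_rows_list m (mmul A B))"
    by (simp add: mat_of_rows_list_def)
  fix i j assume i: "i < dim_row (mat_of_rows_list m (mmul A B))" and j: "j < dim_col (mat_of_rows_list m (mmul A B))"
  hence i: "i < n" and j: "j < m" using A by (auto simp: mat_of_rows_list_def mmul_def wfl_def)
  have tB: "length (List.transpose B) = m" "List.transpose B ! j = map (\<lambda>r. r ! j) B"
    using transpose_wfl[OF B k] j by auto
  have lAi: "length (A ! i) = k" using A i by (auto simp: wfl_def)
  have lB: "length B = k" using B by (auto simp: wfl_def)
  have "mmul A B ! i ! j = sum_list (map2 (*) (A ! i) (map (\<lambda>r. r ! j) B))"
    using A i j tB by (simp add: mmul_def wfl_def)
  also have "\<dots> = (\<Sum>l<k. A ! i ! l * B ! l ! j)"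
    using lAi lB by (subst sum_list_map2_nth[of _ k]) auto
  finally have r: "mmul A B ! i ! j = (\<Sum>l<k. A ! i ! l * B ! l ! j)" .
  have "mat_of_rows_list m (mmul A B) $$ (i,j) = mmul A B ! i ! j"
    using i j A by (simp add: mat_of_rows_list_def mmul_def wfl_def)
  moreover have "(mat_of_rows_list k A * mat_of_rows_list m B) $$ (i,j) = (\<Sum>l<k. A ! i ! l * B ! l ! j)"
    using A B i j lB by (auto simp: mat_of_rows_list_def wfl_def scalar_prod_def atLeast0LessThan intro!: sum.cong)
  ultimately show "(mat_of_rows_list k A * mat_of_rows_list m B) $$ (i, j) = mat_of_rows_list m (mmul A B) $$ (i, j)"
    using r by simp
qed

lemma transpose_bridge:
  assumes A: "wfl n m A" and n: "n > 0"
  shows "transpose_mat (mat_of_rows_list m A) = mat_of_rows_list n (List.transpose A)"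
  using transpose_wfl[OF A n] A by (intro eq_matI) (auto simp: mat_of_rows_list_def wfl_def)

lemma wfl_mmul: "wfl n k A \<Longrightarrow> wfl k m B \<Longrightarrow> k > 0 \<Longrightarrow> wfl n m (mmul A B)"
  using transpose_wfl[of k m B] by (auto simp: wfl_def mmul_def)

lemma wfl_transpose: "wfl n m A \<Longrightarrow> n > 0 \<Longrightarrow> wfl m n (List.transpose A)"
  using transpose_wfl[of n m A] by (auto simp: wfl_def in_set_conv_nth)

definition idl :: "nat \<Rightarrow> 'a::{zero,one} list list" where
  "idl n = map (\<lambda>i. map (\<lambda>j. if i = j then 1 else 0) [0..<n]) [0..<n]"

lemma id_bridge: "1\<^sub>m n = mat_of_rows_list n (idl n)"
  by (intro eq_matI) (auto simp: mat_of_rows_list_def idl_def)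

lemma mat_of_rows_list_carrier: "wfl n m A \<Longrightarrow> mat_of_rows_list m A \<in> carrier_mat n m"
  by (simp add: mat_of_rows_list_def wfl_def)



lemma char_poly_blockdiag:
  fixes A D :: "'a::idom mat"
  assumes A: "A \<in> carrier_mat n n" and D: "D \<in> carrier_mat m m"
  shows "char_poly (four_block_mat A (0\<^sub>m n m) (0\<^sub>m m n) D) = char_poly A * char_poly D"
proof -
  have "char_poly_matrix (four_block_mat A (0\<^sub>m n m) (0\<^sub>m m n) D) =
    four_block_mat (char_poly_matrix A) (0\<^sub>m n m) (0\<^sub>m m n) (char_poly_matrix D)"
    using A D by (intro eq_matI) (auto simp: char_poly_matrix_def)
  then show ?thesis unfolding char_poly_def
    using A D by (simp add: det_four_block_mat_lower_left_zero[of _ n _ m])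
qed

lemma char_poly_one: "char_poly (1\<^sub>m n :: 'a::comm_ring_1 mat) = [:-1,1:]^n"
proof -
  have "char_poly (1\<^sub>m n :: 'a mat) = (\<Prod>a\<leftarrow>diag_mat (1\<^sub>m n). [:- a, 1:])"
    by (rule char_poly_upper_triangular[of _ n]) (auto simp: upper_triangular_def)
  also have "diag_mat (1\<^sub>m n :: 'a mat) = replicate n 1"
    by (rule nth_equalityI) (auto simp: diag_mat_def)
  finally show ?thesis by (simp add: prod_list_replicate)
qed

lemma form_re:
  fixes w :: "complex vec" and G :: "int mat"
  assumes w: "w \<in> carrier_vec n" and G: "G \<in> carrier_mat n n"
  shows "Re (w \<bullet> (map_mat of_int G *\<^sub>v map_vec cnj w)) =
    (\<Sum>i<n. \<Sum>j<n. of_int (G $$ (i,j)) * (Re (w$i) * Re (w$j) + Im (w$i) * Im (w$j)))"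
  using w G by (auto simp: scalar_prod_def mult_mat_vec_def row_def atLeast0LessThan sum_distrib_left
     algebra_simps intro!: sum.cong)

lemma form_im:
  fixes w :: "complex vec" and G :: "int mat"
  assumes w: "w \<in> carrier_vec n" and G: "G \<in> carrier_mat n n"
    and sym: "\<And>i j. i < n \<Longrightarrow> j < n \<Longrightarrow> G $$ (i,j) = G $$ (j,i)"
  shows "Im (w \<bullet> (map_mat of_int G *\<^sub>v map_vec cnj w)) = 0"
proof -
  have "Im (w \<bullet> (map_mat of_int G *\<^sub>v map_vec cnj w)) =
    (\<Sum>i<n. \<Sum>j<n. of_int (G $$ (i,j)) * (Im (w$i) * Re (w$j))) - 
    (\<Sum>i<n. \<Sum>j<n. of_int (G $$ (i,j)) * (Re (w$i) * Im (w$j)))"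
    using w G by (auto simp: scalar_prod_def mult_mat_vec_def row_def atLeast0LessThan sum_distrib_left
     algebra_simps sum_subtractf[symmetric] intro!: sum.cong)
  also have "(\<Sum>i<n. \<Sum>j<n. of_int (G $$ (i,j)) * (Re (w$i) * Im (w$j))) =
     (\<Sum>j<n. \<Sum>i<n. of_int (G $$ (i,j)) * (Re (w$i) * Im (w$j)))"
    by (rule sum.swap)
  also have "\<dots> = (\<Sum>i<n. \<Sum>j<n. of_int (G $$ (i,j)) * (Im (w$i) * Re (w$j)))"
    using sym by (intro sum.cong refl) (auto simp: algebra_simps)
  finally show ?thesis by simp
qed

lemma cnj_mult_mat_vec:
  fixes P :: "int mat" and w :: "complex vec"
  assumes "P \<in> carrier_mat n m" "w \<in> carrier_vec m"
  shows "map_vec cnj (map_mat of_int P *\<^sub>v w) = map_mat of_int P *\<^sub>v map_vec cnj w"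
  using assms by (intro eq_vecI) (auto simp: mult_mat_vec_def scalar_prod_def row_def)

lemma isotropic:
  fixes F K :: "complex mat" and s :: "complex vec"
  assumes F: "F \<in> carrier_mat n n" and K: "K \<in> carrier_mat n n" and s: "s \<in> carrier_vec n"
    and iso: "transpose_mat F * K * F = K" and ev: "F *\<^sub>v s = d \<cdot>\<^sub>v s" and d: "d^2 \<noteq> 1"
  shows "s \<bullet> (K *\<^sub>v s) = 0"
proof -
  have "s \<bullet> (K *\<^sub>v s) = s \<bullet> ((transpose_mat F * K * F) *\<^sub>v s)" using iso by simp
  also have "\<dots> = s \<bullet> (transpose_mat F *\<^sub>v (K *\<^sub>v (F *\<^sub>v s)))"
    using F K s by (simp add: assoc_mult_mat_vec[of _ n n _ n])
  also have "\<dots> = (F *\<^sub>v s) \<bullet> (K *\<^sub>v (F *\<^sub>v s))"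
    using transpose_vec_mult_scalar[of "transpose_mat F" n n "K *\<^sub>v (F *\<^sub>v s)" s] F K s
    by simp
  also have "\<dots> = d * d * (s \<bullet> (K *\<^sub>v s))"
    unfolding ev using K s by (simp add: mult_mat_vec[of _ n n] smult_scalar_prod_distrib[of _ n] scalar_prod_smult_distrib[of _ n])
  finally have "(1 - d^2) * (s \<bullet> (K *\<^sub>v s)) = 0" by (simp add: algebra_simps power2_eq_square)
  with d show ?thesis by simp
qed



definition Xm :: "nat \<Rightarrow> (nat \<Rightarrow> 'a::comm_ring_1) \<Rightarrow> 'a poly mat" where
  "Xm n c = mat n n (\<lambda>(i,j). (if i = j then [:0,1:] else 0) +
      (if i = Suc j then -1 else if j = n - 1 then [:c i:] else 0))"

lemma det_Xm: "n \<ge> 1 \<Longrightarrow> det (Xm n c) = [:0,1:]^n + (\<Sum>i<n. [:c i:] * [:0,1:]^i)"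
proof (induction n arbitrary: c rule: nat_induct_at_least)
  case base
  have "det (Xm 1 c) = Xm 1 c $$ (0,0)" by (rule det_single) (simp add: Xm_def)
  also have "\<dots> = [:0,1:] + [:c 0:]" by (simp add: Xm_def)
  finally show ?case by simp
next
  case (Suc n)
  let ?X = "Xm (Suc n) c"
  have X: "?X \<in> carrier_mat (Suc n) (Suc n)" by (simp add: Xm_def)
  have "det ?X = (\<Sum>j<Suc n. ?X $$ (0,j) * cofactor ?X 0 j)"
    by (rule laplace_expansion_row[OF X], simp)
  also have "\<dots> = (\<Sum>j\<in>{0,n}. ?X $$ (0,j) * cofactor ?X 0 j)"
    by (rule sum.mono_neutral_right) (use Suc.hyps in \<open>auto simp: Xm_def\<close>)
  also have "\<dots> = [:0,1:] * cofactor ?X 0 0 + [:c 0:] * cofactor ?X 0 n"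
    using Suc.hyps by (simp add: Xm_def)
  finally have e1: "det ?X = [:0,1:] * cofactor ?X 0 0 + [:c 0:] * cofactor ?X 0 n" .
  have e2: "mat_delete ?X 0 0 = Xm n (\<lambda>i. c (Suc i))"
    by (rule eq_matI) (auto simp: Xm_def mat_delete_def)
  have e3: "det (mat_delete ?X 0 n) = (-1)^n"
  proof -
    have ut: "upper_triangular (mat_delete ?X 0 n)"
      unfolding upper_triangular_def by (auto simp: Xm_def mat_delete_def)
    have "det (mat_delete ?X 0 n) = prod_list (diag_mat (mat_delete ?X 0 n))"
      by (rule det_upper_triangular[OF ut, of n], simp add: Xm_def mat_delete_def)
    also have "diag_mat (mat_delete ?X 0 n) = replicate n (-1)"
      by (rule nth_equalityI) (auto simp: diag_mat_def Xm_def mat_delete_def)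
    finally show ?thesis by simp
  qed
  have "det ?X = [:0,1:] * det (Xm n (\<lambda>i. c (Suc i))) + [:c 0:] * ((-1)^n * (-1)^n)"
    unfolding e1 cofactor_def e2 e3 by simp
  also have "\<dots> = [:0,1:] * ([:0,1:]^n + (\<Sum>i<n. [:c (Suc i):] * [:0,1:]^i)) + [:c 0:]"
    using Suc.IH by (simp flip: power_mult_distrib)
  also have "\<dots> = [:0,1:]^Suc n + ([:c 0:] * [:0,1:]^0 + (\<Sum>i<n. [:c (Suc i):] * [:0,1:]^Suc i))"
    by (simp add: sum_distrib_left algebra_simps)
  also have "[:c 0:] * [:0,1:]^0 + (\<Sum>i<n. [:c (Suc i):] * [:0,1:]^Suc i) = (\<Sum>i<Suc n. [:c i:] * [:0,1:]^i)"
    by (rule sum.lessThan_Suc_shift[symmetric])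
  finally show ?case .
qed

definition Kl :: "int list list" where "Kl = [[- 2,1,0,0,0,0,0,0,0,0,0,0,0,0,0,0,0,0,0,0,0,0],[1,- 2,1,0,0,0,0,0,0,0,0,0,0,0,0,0,0,0,0,0,0,0],[0,1,- 2,1,0,0,0,1,0,0,0,0,0,0,0,0,0,0,0,0,0,0],[0,0,1,- 2,1,0,0,0,0,0,0,0,0,0,0,0,0,0,0,0,0,0],[0,0,0,1,- 2,1,0,0,0,0,0,0,0,0,0,0,0,0,0,0,0,0],[0,0,0,0,1,- 2,1,0,0,0,0,0,0,0,0,0,0,0,0,0,0,0],[0,0,0,0,0,1,- 2,0,0,0,0,0,0,0,0,0,0,0,0,0,0,0],[0,0,1,0,0,0,0,- 2,0,0,0,0,0,0,0,0,0,0,0,0,0,0],[0,0,0,0,0,0,0,0,- 2,1,0,0,0,0,0,0,0,0,0,0,0,0],[0,0,0,0,0,0,0,0,1,- 2,1,0,0,0,0,0,0,0,0,0,0,0],[0,0,0,0,0,0,0,0,0,1,- 2,1,0,0,0,1,0,0,0,0,0,0],[0,0,0,0,0,0,0,0,0,0,1,- 2,1,0,0,0,0,0,0,0,0,0],[0,0,0,0,0,0,0,0,0,0,0,1,- 2,1,0,0,0,0,0,0,0,0],[0,0,0,0,0,0,0,0,0,0,0,0,1,- 2,1,0,0,0,0,0,0,0],[0,0,0,0,0,0,0,0,0,0,0,0,0,1,- 2,0,0,0,0,0,0,0],[0,0,0,0,0,0,0,0,0,0,1,0,0,0,0,- 2,0,0,0,0,0,0],[0,0,0,0,0,0,0,0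,0,0,0,0,0,0,0,0,0,1,0,0,0,0],[0,0,0,0,0,0,0,0,0,0,0,0,0,0,0,0,1,0,0,0,0,0],[0,0,0,0,0,0,0,0,0,0,0,0,0,0,0,0,0,0,0,1,0,0],[0,0,0,0,0,0,0,0,0,0,0,0,0,0,0,0,0,0,1,0,0,0],[0,0,0,0,0,0,0,0,0,0,0,0,0,0,0,0,0,0,0,0,0,1],[0,0,0,0,0,0,0,0,0,0,0,0,0,0,0,0,0,0,0,0,1,0]]"
definition Fl :: "int list list" where "Fl = [[1,0,0,0,0,0,0,0,0,0,0,0,0,0,0,0,0,0,0,0,0,0],[0,1,0,0,0,0,0,0,0,0,0,0,0,0,0,0,0,0,0,0,0,0],[0,0,1,0,0,0,0,0,0,0,0,0,0,0,0,0,0,0,0,0,0,0],[0,0,0,1,0,0,0,0,0,0,0,0,0,0,0,0,0,0,0,0,0,0],[0,0,0,0,1,0,0,0,0,0,0,0,0,0,0,0,0,0,0,0,0,0],[0,0,0,0,0,1,0,0,0,0,0,0,0,0,0,0,0,0,0,0,0,0],[0,0,0,0,0,0,1,0,0,0,0,0,0,0,0,0,0,0,0,0,0,0],[0,0,0,0,0,0,0,1,0,0,0,0,0,0,0,0,0,0,0,0,0,0],[0,0,0,0,0,0,0,0,311,- 136,- 140,433,- 371,- 151,- 79,264,12,34,- 49,- 85,182,1026],[0,0,0,0,0,0,0,0,469,- 205,- 210,653,- 558,- 225,- 125,396,18,52,- 70,- 123,275,1553],[0,0,0,0,0,0,0,0,686,- 301,- 306,955,- 815,- 328,- 185,578,27,77,-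 100,- 178,402,2275],[0,0,0,0,0,0,0,0,571,- 251,- 255,796,- 679,- 273,- 155,482,23,64,- 83,- 148,335,1896],[0,0,0,0,0,0,0,0,251,- 111,- 109,348,- 294,- 114,- 80,207,12,30,- 28,- 56,147,843],[0,0,0,0,0,0,0,0,113,- 50,- 48,155,- 129,- 48,- 42,91,6,14,- 8,- 20,66,383],[0,0,0,0,0,0,0,0,46,- 20,- 20,64,- 53,- 20,- 17,37,3,6,- 3,- 9,27,157],[0,0,0,0,0,0,0,0,411,- 180,- 185,573,- 490,- 201,- 104,349,15,45,- 65,- 112,241,1357],[0,0,0,0,0,0,0,0,- 5,2,3,- 7,6,3,0,- 5,1,0,2,2,- 3,- 14],[0,0,0,0,0,0,0,0,- 17,8,6,- 21,18,7,5,- 13,1,0,2,2,- 10,- 51],[0,0,0,0,0,0,0,0,51,- 22,- 25,72,- 63,- 29,- 5,46,0,4,- 14,- 20,30,159],[0,0,0,0,0,0,0,0,32,- 13,- 17,47,- 42,- 21,0,31,1,3,- 11,- 16,19,103],[0,0,0,0,0,0,0,0,- 463,203,211,- 647,558,232,105,- 400,- 15,- 49,82,137,- 272,- 1519],[0,0,0,0,0,0,0,0,- 87,38,40,- 122,105,44,19,- 75,- 3,- 9,16,26,- 51,- 285]]"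
definition Finvl :: "int list list" where "Finvl = [[1,0,0,0,0,0,0,0,0,0,0,0,0,0,0,0,0,0,0,0,0,0],[0,1,0,0,0,0,0,0,0,0,0,0,0,0,0,0,0,0,0,0,0,0],[0,0,1,0,0,0,0,0,0,0,0,0,0,0,0,0,0,0,0,0,0,0],[0,0,0,1,0,0,0,0,0,0,0,0,0,0,0,0,0,0,0,0,0,0],[0,0,0,0,1,0,0,0,0,0,0,0,0,0,0,0,0,0,0,0,0,0],[0,0,0,0,0,1,0,0,0,0,0,0,0,0,0,0,0,0,0,0,0,0],[0,0,0,0,0,0,1,0,0,0,0,0,0,0,0,0,0,0,0,0,0,0],[0,0,0,0,0,0,0,1,0,0,0,0,0,0,0,0,0,0,0,0,0,0],[0,0,0,0,0,0,0,0,329,- 129,- 167,447,- 394,- 151,- 49,287,39,9,- 62,- 102,189,1011],[0,0,0,0,0,0,0,0,505,- 199,- 255,689,- 606,- 231,- 77,438,61,13,- 92,- 153,291,1559],[0,0,0,0,0,0,0,0,748,- 296,- 377,1021,- 897,- 342,- 115,648,91,19,- 135,- 226,431,2310],[0,0,0,0,0,0,0,0,621,- 246,- 313,848,- 745,- 284,- 95,538,75,16,- 112,- 188,358,1917],[0,0,0,0,0,0,0,0,281,- 114,- 137,386,- 338,- 124,- 48,237,38,6,- 42,- 78,163,877],[0,0,0,0,0,0,0,0,125,- 52,- 58,173,- 151,- 53,- 24,101,19,2,- 14,- 31,73,395],[0,0,0,0,0,0,0,0,46,- 19,- 22,64,- 57,- 20,- 8,39,7,1,- 7,- 13,27,145],[0,0,0,0,0,0,0,0,440,-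 173,- 224,600,- 528,- 202,- 66,384,52,12,- 83,- 136,253,1355],[0,0,0,0,0,0,0,0,- 16,7,7,- 21,18,8,2,- 13,0,0,3,4,- 9,- 49],[0,0,0,0,0,0,0,0,- 6,3,2,- 7,5,3,0,- 3,1,1,1,0,- 3,- 15],[0,0,0,0,0,0,0,0,47,- 17,- 27,62,- 56,- 25,- 2,46,2,2,- 16,- 20,26,137],[0,0,0,0,0,0,0,0,28,- 9,- 18,38,- 35,- 15,- 2,30,2,2,- 11,- 14,16,82],[0,0,0,0,0,0,0,0,- 499,195,256,- 674,593,234,69,- 439,- 51,- 14,103,159,- 285,- 1519],[0,0,0,0,0,0,0,0,- 89,34,47,- 121,107,42,12,- 80,- 10,- 3,19,30,- 51,- 272]]"
definition Ml :: "int list list" where "Ml = [[311,- 136,- 140,433,- 371,- 151,- 79,264,12,34,- 49,- 85,182,1026],[469,- 205,- 210,653,- 558,- 225,- 125,396,18,52,- 70,- 123,275,1553],[686,- 301,- 306,955,- 815,- 328,- 185,578,27,77,- 100,- 178,402,2275],[571,- 251,- 255,796,- 679,- 273,- 155,482,23,64,- 83,- 148,335,1896],[251,- 111,- 109,348,- 294,- 114,- 80,207,12,30,- 28,- 56,147,843],[113,- 50,- 48,155,- 129,- 48,- 42,91,6,14,- 8,- 20,66,383],[46,- 20,- 20,64,- 53,- 20,- 17,37,3,6,- 3,- 9,27,157],[411,- 180,- 185,573,- 490,- 201,- 104,349,15,45,- 65,- 112,241,1357],[- 5,2,3,- 7,6,3,0,- 5,1,0,2,2,- 3,- 14],[- 17,8,6,-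 21,18,7,5,- 13,1,0,2,2,- 10,- 51],[51,- 22,- 25,72,- 63,- 29,- 5,46,0,4,- 14,- 20,30,159],[32,- 13,- 17,47,- 42,- 21,0,31,1,3,- 11,- 16,19,103],[- 463,203,211,- 647,558,232,105,- 400,- 15,- 49,82,137,- 272,- 1519],[- 87,38,40,- 122,105,44,19,- 75,- 3,- 9,16,26,- 51,- 285]]"
definition Bl :: "int list list" where "Bl = [[- 1,0,1,- 3,2,2,1,- 1,0,0,1,1,- 1,- 5],[- 7,2,5,- 9,6,5,0,- 7,1,0,2,2,- 4,- 20],[- 1,1,0,- 2,3,- 2,1,- 1,0,0,- 1,- 1,- 1,- 5],[3,- 1,- 2,4,- 2,- 2,- 2,3,0,0,0,0,2,10],[- 1,1,- 1,1,0,0,- 1,0,0,0,0,0,0,0],[3,- 1,- 2,5,- 3,- 2,0,2,- 1,0,0,0,2,10],[6,- 3,- 3,9,- 9,- 4,1,7,- 1,0,- 3,- 3,4,19],[4,- 2,- 2,5,- 5,- 1,0,4,0,0,- 1,- 1,2,12],[4,- 2,- 1,5,- 5,- 1,- 1,2,0,0,- 1,- 1,2,10],[4,- 1,- 2,4,- 3,- 3,0,3,0,0,- 1,- 2,2,9],[0,1,- 1,0,0,- 1,0,1,0,0,- 1,- 1,0,0],[- 2,2,0,- 2,3,0,- 1,- 2,- 1,0,0,1,- 1,- 5],[15,- 6,- 7,20,- 16,- 7,- 3,12,0,0,- 1,- 2,9,48],[- 6,2,3,- 7,4,3,3,- 4,- 1,- 1,- 1,1,- 3,- 19]]"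
definition Binvl :: "int list list" where "Binvl = [[- 67,- 41,- 40,- 26,- 29,- 27,- 20,11,- 25,15,- 41,6,- 9,0],[- 102,- 63,- 61,- 41,- 43,- 43,- 30,16,- 39,23,- 64,10,- 13,0],[- 148,- 91,- 88,- 59,- 62,- 63,- 43,24,- 57,34,- 95,15,- 19,0],[- 123,- 76,- 73,- 49,- 51,- 52,- 36,20,- 47,28,- 79,12,- 16,0],[- 52,- 34,- 31,- 23,- 20,- 26,- 15,8,- 21,13,- 38,7,- 6,0],[- 21,- 15,- 13,- 11,- 7,- 13,- 6,3,- 9,6,- 18,4,- 2,0],[- 10,- 7,- 6,- 5,- 4,- 5,- 3,1,- 4,2,- 7,1,- 1,0],[- 89,- 54,- 53,- 34,- 38,- 36,- 26,15,- 34,20,- 55,8,- 12,0],[- 2,- 2,- 1,- 1,- 1,- 1,- 1,- 1,0,- 1,0,- 1,0,0],[- 4,- 4,- 3,- 2,- 3,- 1,- 1,- 2,0,- 2,0,- 1,- 1,- 1],[- 10,- 4,- 6,- 2,- 5,- 1,- 3,3,- 4,3,- 4,0,- 2,0],[- 12,- 7,- 7,- 3,- 7,- 2,- 4,1,- 3,0,- 3,- 1,- 2,0],[98,56,57,35,43,35,29,- 20,37,- 22,57,- 8,14,0],[20,12,12,7,9,7,6,- 3,7,- 4,11,- 1,3,0]]"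
definition Cl :: "int list list" where "Cl = [[0,0,0,0,0,0,0,0,0,0,0,0,0,- 1],[1,0,0,0,0,0,0,0,0,0,0,0,0,0],[0,1,0,0,0,0,0,0,0,0,0,0,0,0],[0,0,1,0,0,0,0,0,0,0,0,0,0,1],[0,0,0,1,0,0,0,0,0,0,0,0,0,1],[0,0,0,0,1,0,0,0,0,0,0,0,0,0],[0,0,0,0,0,1,0,0,0,0,0,0,0,0],[0,0,0,0,0,0,1,0,0,0,0,0,0,- 1],[0,0,0,0,0,0,0,1,0,0,0,0,0,0],[0,0,0,0,0,0,0,0,1,0,0,0,0,0],[0,0,0,0,0,0,0,0,0,1,0,0,0,1],[0,0,0,0,0,0,0,0,0,0,1,0,0,1],[0,0,0,0,0,0,0,0,0,0,0,1,0,0],[0,0,0,0,0,0,0,0,0,0,0,0,1,0]]"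
definition Pl :: "int list list" where "Pl = [[0,0,0,0,0,0,0,0,0,0,0,0,0,0],[0,0,0,0,0,0,0,0,0,0,0,0,0,0],[0,0,0,0,0,0,0,0,0,0,0,0,0,0],[0,0,0,0,0,0,0,0,0,0,0,0,0,0],[0,0,0,0,0,0,0,0,0,0,0,0,0,0],[0,0,0,0,0,0,0,0,0,0,0,0,0,0],[0,0,0,0,0,0,0,0,0,0,0,0,0,0],[0,0,0,0,0,0,0,0,0,0,0,0,0,0],[- 67,- 41,- 40,- 26,- 29,- 27,- 20,11,- 25,15,- 41,6,- 9,0],[- 102,- 63,- 61,- 41,- 43,- 43,- 30,16,- 39,23,- 64,10,- 13,0],[- 148,- 91,- 88,- 59,- 62,- 63,- 43,24,- 57,34,- 95,15,- 19,0],[- 123,- 76,- 73,- 49,- 51,- 52,- 36,20,- 47,28,- 79,12,- 16,0],[- 52,- 34,- 31,- 23,- 20,- 26,- 15,8,- 21,13,- 38,7,- 6,0],[- 21,- 15,- 13,- 11,- 7,- 13,- 6,3,- 9,6,- 18,4,- 2,0],[- 10,- 7,- 6,- 5,- 4,- 5,- 3,1,- 4,2,- 7,1,- 1,0],[- 89,- 54,- 53,- 34,- 38,- 36,- 26,15,- 34,20,- 55,8,- 12,0],[- 2,- 2,- 1,- 1,- 1,- 1,- 1,- 1,0,- 1,0,- 1,0,0],[- 4,- 4,- 3,- 2,- 3,- 1,- 1,- 2,0,- 2,0,- 1,- 1,- 1],[- 10,- 4,- 6,- 2,- 5,- 1,- 3,3,- 4,3,- 4,0,- 2,0],[- 12,-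 7,- 7,- 3,- 7,- 2,- 4,1,- 3,0,- 3,- 1,- 2,0],[98,56,57,35,43,35,29,- 20,37,- 22,57,- 8,14,0],[20,12,12,7,9,7,6,- 3,7,- 4,11,- 1,3,0]]"
definition G14l :: "int list list" where "G14l = [[0,0,1,0,1,0,1,1,1,1,1,1,2,2],[0,0,0,1,0,1,0,1,1,1,1,1,1,2],[1,0,0,0,1,0,1,0,1,1,1,1,1,1],[0,1,0,0,0,1,0,1,0,1,1,1,1,1],[1,0,1,0,0,0,1,0,1,0,1,1,1,1],[0,1,0,1,0,0,0,1,0,1,0,1,1,1],[1,0,1,0,1,0,0,0,1,0,1,0,1,1],[1,1,0,1,0,1,0,0,0,1,0,1,0,1],[1,1,1,0,1,0,1,0,0,0,1,0,1,0],[1,1,1,1,0,1,0,1,0,0,0,1,0,1],[1,1,1,1,1,0,1,0,1,0,0,0,1,0],[1,1,1,1,1,1,0,1,0,1,0,0,0,1],[2,1,1,1,1,1,1,0,1,0,1,0,0,0],[2,2,1,1,1,1,1,1,0,1,0,1,0,0]]"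

definition wl :: "complex \<Rightarrow> complex list" where
  "wl d = [d^13 - d^10 - d^9 + d^6 - d^3 - d^2, d^12 - d^9 - d^8 + d^5 - d^2 - d, d^11 - d^8 - d^7 + d^4 - d - 1, d^10 - d^7 - d^6 + d^3 - 1, d^9 - d^6 - d^5 + d^2, d^8 - d^5 - d^4 + d, d^7 - d^4 - d^3 + 1, d^6 - d^3 - d^2, d^5 - d^2 - d, d^4 - d - 1, d^3 - 1, d^2, d, 1]"

lemma wfl_code: "wfl n m A \<longleftrightarrow> length A = n \<and> list_all (\<lambda>r. length r = m) A"
  by (auto simp: wfl_def list_all_iff)

lemma wf_all: "wfl 22 22 Kl" "wfl 22 22 Fl" "wfl 22 22 Finvl" "wfl 14 14 Ml" "wfl 14 14 Bl"
  "wfl 14 14 Binvl" "wfl 14 14 Cl" "wfl 22 14 Pl" "wfl 14 14 G14l"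
  unfolding wfl_code by code_simp+

lemma chk_inv: "mmul Fl Finvl = idl 22" "mmul Finvl Fl = idl 22" by code_simp+
lemma chk_iso: "mmul (mmul (List.transpose Fl) Kl) Fl = Kl" by code_simp
lemma chk_FP: "mmul Fl Pl = mmul Pl Cl" by code_simp
lemma chk_G: "mmul (List.transpose Pl) (mmul Kl Pl) = G14l" by code_simp
lemma chk_sim: "Ml = mmul (mmul Binvl Cl) Bl" "mmul Binvl Bl = idl 14" "mmul Bl Binvl = idl 14" by code_simp+
lemma chk_K: "\<forall>i\<in>set [0..<22]. \<forall>j\<in>set [0..<22]. k3_entry i j = Kl ! i ! j"
  by code_simp
lemma chk_Fb: "\<forall>i\<in>set [0..<22]. \<forall>j\<in>set [0..<22]. Fl ! i ! j =
   (if i < 8 then (if j < 8 then (if i = j then 1 else 0) else 0) else if j < 8 then 0 else Ml ! (i-8) ! (j-8))"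
  by code_simp
lemma chk_C: "\<forall>i\<in>set [0..<14]. \<forall>j\<in>set [0..<14]. Cl ! i ! j =
   (if i = Suc j then 1 else if j = 13 then - nth_default 0 [1, 0, 0, - 1, - 1, 0, 0, 1, 0, 0, - 1, - 1, 0, 0, 1] i else 0)"
  by code_simp
lemma chk_Gsym: "\<forall>i\<in>set [0..<14]. \<forall>j\<in>set [0..<14]. G14l ! i ! j = G14l ! j ! i"
  by code_simp

lemma abs4: "\<bar>a + b + c + (d::real)\<bar> \<le> \<bar>a\<bar> + \<bar>b\<bar> + \<bar>c\<bar> + \<bar>d\<bar>"
  by (smt (verit) abs_triangle_ineq)
lemma mr_mul:
  fixes x y x0 y0 ex ey c e :: real
  assumes "\<bar>x - x0\<bar> \<le> ex" "\<bar>y - y0\<bar> \<le> ey"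
    "\<bar>x0\<bar> * ey + \<bar>y0\<bar> * ex + ex * ey + \<bar>x0 * y0 - c\<bar> \<le> e"
  shows "\<bar>x * y - c\<bar> \<le> e"
proof -
  have "x * y - c = x0 * (y - y0) + y0 * (x - x0) + (x - x0) * (y - y0) + (x0 * y0 - c)" by (simp add: algebra_simps)
  also have "\<bar>\<dots>\<bar> \<le> \<bar>x0 * (y - y0)\<bar> + \<bar>y0 * (x - x0)\<bar> + \<bar>(x - x0) * (y - y0)\<bar> + \<bar>x0 * y0 - c\<bar>"
    by (rule abs4)
  also have "\<dots> = \<bar>x0\<bar> * \<bar>y - y0\<bar> + \<bar>y0\<bar> * \<bar>x - x0\<bar> + \<bar>x - x0\<bar> * \<bar>y - y0\<bar> + \<bar>x0 * y0 - c\<bar>"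
    by (simp add: abs_mult)
  also have "\<dots> \<le> \<bar>x0\<bar> * ey + \<bar>y0\<bar> * ex + ex * ey + \<bar>x0 * y0 - c\<bar>"
    using assms by (intro add_mono mult_mono order_refl) auto
  finally show ?thesis using assms(3) by linarith
qed
lemma mr_cmul:
  fixes x x0 ex c e k :: real
  assumes "\<bar>x - x0\<bar> \<le> ex" "\<bar>k * x0 - c\<bar> + \<bar>k\<bar> * ex \<le> e"
  shows "\<bar>k * x - c\<bar> \<le> e"
proof -
  have "k * x - c = k * (x - x0) + (k * x0 - c)" by (simp add: algebra_simps)
  hence "\<bar>k * x - c\<bar> \<le> \<bar>k\<bar> * \<bar>x - x0\<bar> + \<bar>k * x0 - c\<bar>"
    by (metis abs_mult abs_triangle_ineq)
  also have "\<dots> \<le> \<bar>k\<bar> * ex + \<bar>k * x0 - c\<bar>" using assms by (intro add_mono mult_left_mono) auto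
  finally show ?thesis using assms(2) by linarith
qed
lemma mr_add:
  fixes x y x0 y0 ex ey c e :: real
  assumes "\<bar>x - x0\<bar> \<le> ex" "\<bar>y - y0\<bar> \<le> ey" "\<bar>x0 + y0 - c\<bar> + ex + ey \<le> e"
  shows "\<bar>x + y - c\<bar> \<le> e"
  using assms by (simp only: abs_le_iff) linarith

lemma mr_sub:
  fixes x y x0 y0 ex ey c e :: real
  assumes "\<bar>x - x0\<bar> \<le> ex" "\<bar>y - y0\<bar> \<le> ey" "\<bar>x0 - y0 - c\<bar> + ex + ey \<le> e"
  shows "\<bar>x - y - c\<bar> \<le> e"
  using assms by (simp only: abs_le_iff) linarith

lemma mr_eq:
  fixes s t c e :: real
  assumes "s = t" "\<bar>t - c\<bar> \<le> e" shows "\<bar>s - c\<bar> \<le> e"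
  using assms by simp

lemma mr_pos:
  fixes t c e :: real
  assumes "\<bar>t - c\<bar> \<le> e" "e < c" shows "0 < t"
  using assms by (simp only: abs_le_iff) linarith

lemma Re_pow_Suc: "Re (z^Suc k) = Re (z^k) * Re z - Im (z^k) * Im z"
  by (simp add: power_Suc2)

lemma Im_pow_Suc: "Im (z^Suc k) = Re (z^k) * Im z + Im (z^k) * Re z"
  by (simp add: power_Suc2)

lemma sum14: "(\<Sum>i::nat<14. f i) = f 0 + f 1 + f 2 + f 3 + f 4 + f 5 + f 6 + f 7 + f 8 + f 9 + f 10 + f 11 + f 12 + (f 13 :: real)"
  by (simp add: lessThan_nat_numeral algebra_simps)
lemma numeric:
  fixes d :: complex
  assumes hd: "cmod (d - Complex (-0.9903988352300419) (-0.13823945592693967)) < 1 / 10^6"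
  shows "0 < (\<Sum>i<14. Re (wl d ! i) * (\<Sum>j<14. real_of_int (G14l ! i ! j) * Re (wl d ! j)) +
                      Im (wl d ! i) * (\<Sum>j<14. real_of_int (G14l ! i ! j) * Im (wl d ! j)))"
proof -
  have hre: "\<bar>Re d - (- 0.9903988352300419)\<bar> \<le> 0.000001"
    using abs_Re_le_cmod[of "d - Complex (-0.9903988352300419) (-0.13823945592693967)"] hd by simp
  have him: "\<bar>Im d - (- 0.13823945592693967)\<bar> \<le> 0.000001"
    using abs_Im_le_cmod[of "d - Complex (-0.9903988352300419) (-0.13823945592693967)"] hd by simp
  have hone: "\<bar>(1::real) - 1\<bar> \<le> 0" by simp
  define Yr where "Yr = (\<lambda>i. \<Sum>j<14. real_of_int (G14l ! i ! j) * Re (wl d ! j))"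
  define Yi where "Yi = (\<lambda>i. \<Sum>j<14. real_of_int (G14l ! i ! j) * Im (wl d ! j))"
  have n1: "\<bar>Re d * Re d - 0.980889852825\<bar> \<le> 0.000001980798695" by (rule mr_mul[OF hre hre]) simp
  have n2: "\<bar>Im d * Im d - 0.019110147175\<bar> \<le> 0.000000276479936" by (rule mr_mul[OF him him]) simp
  have n3: "\<bar>Re d * Re d - Im d * Im d - 0.96177970565\<bar> \<le> 0.000002257278631" by (rule mr_sub[OF n1 n2]) simp
  have n4: "\<bar>Re (d^2) - 0.96177970565\<bar> \<le> 0.000002257278631" by (rule mr_eq[OF _ n3]) (simp add: power2_eq_square)
  have n5: "\<bar>Re d * Im d - 0.136912196133\<bar> \<le> 0.000001128639416" by (rule mr_mul[OF hre him]) simp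
  have n6: "\<bar>Im d * Re d - 0.136912196133\<bar> \<le> 0.000001128639416" by (rule mr_mul[OF him hre]) simp
  have n7: "\<bar>Re d * Im d + Im d * Re d - 0.273824392266\<bar> \<le> 0.000002257278832" by (rule mr_add[OF n5 n6]) simp
  have n8: "\<bar>Im (d^2) - 0.273824392266\<bar> \<le> 0.000002257278832" by (rule mr_eq[OF _ n7]) (simp add: power2_eq_square algebra_simps)
  have n9: "\<bar>Re (d^2) * Re d - (- 0.952545500224)\<bar> \<le> 0.000003197388438" by (rule mr_mul[OF n4 hre]) simp
  have n10: "\<bar>Im (d^2) * Im d - (- 0.037853335006)\<bar> \<le> 0.000000585872024" by (rule mr_mul[OF n8 him]) simp
  have n11: "\<bar>Re (d^2) * Re d - Im (d^2) * Im d - (- 0.914692165218)\<bar> \<le> 0.000003783260462" by (rule mr_sub[OF n9 n10]) simp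
  have n12: "\<bar>Re (d^3) - (- 0.914692165218)\<bar> \<le> 0.000003783260462" by (rule mr_eq[OF _ n11]) (use Re_pow_Suc[of d 2] in simp)
  have n13: "\<bar>Re (d^2) * Im d - (- 0.132955903231)\<bar> \<le> 0.000001273827305" by (rule mr_mul[OF n4 him]) simp
  have n14: "\<bar>Im (d^2) * Re d - (- 0.271195359158)\<bar> \<le> 0.000002509433156" by (rule mr_mul[OF n8 hre]) simp
  have n15: "\<bar>Re (d^2) * Im d + Im (d^2) * Re d - (- 0.404151262389)\<bar> \<le> 0.000003783260461" by (rule mr_add[OF n13 n14]) simp
  have n16: "\<bar>Im (d^3) - (- 0.404151262389)\<bar> \<le> 0.000003783260461" by (rule mr_eq[OF _ n15]) (use Im_pow_Suc[of d 2] in simp)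
  have n17: "\<bar>Re (d^3) * Re d - 0.905910055026\<bar> \<le> 0.000004661632752" by (rule mr_mul[OF n12 hre]) simp
  have n18: "\<bar>Im (d^3) * Im d - 0.055869650625\<bar> \<le> 0.000000927151073" by (rule mr_mul[OF n16 him]) simp
  have n19: "\<bar>Re (d^3) * Re d - Im (d^3) * Im d - 0.850040404401\<bar> \<le> 0.000005588783825" by (rule mr_sub[OF n17 n18]) simp
  have n20: "\<bar>Re (d^4) - 0.850040404401\<bar> \<le> 0.000005588783825" by (rule mr_eq[OF _ n19]) (use Re_pow_Suc[of d 3] in simp)
  have n21: "\<bar>Re (d^3) * Im d - 0.12644654726\<bar> \<le> 0.000001437692188" by (rule mr_mul[OF n12 him]) simp
  have n22: "\<bar>Im (d^3) * Re d - 0.400270939527\<bar> \<le> 0.000004151091983" by (rule mr_mul[OF n16 hre]) simp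
  have n23: "\<bar>Re (d^3) * Im d + Im (d^3) * Re d - 0.526717486787\<bar> \<le> 0.000005588784171" by (rule mr_add[OF n21 n22]) simp
  have n24: "\<bar>Im (d^4) - 0.526717486787\<bar> \<le> 0.000005588784171" by (rule mr_eq[OF _ n23]) (use Im_pow_Suc[of d 3] in simp)
  have n25: "\<bar>Re (d^4) * Re d - (- 0.841879026417)\<bar> \<le> 0.000006385171208" by (rule mr_mul[OF n20 hre]) simp
  have n26: "\<bar>Im (d^4) * Im d - (- 0.072813138801)\<bar> \<le> 0.000001299313919" by (rule mr_mul[OF n24 him]) simp
  have n27: "\<bar>Re (d^4) * Re d - Im (d^4) * Im d - (- 0.769065887616)\<bar> \<le> 0.000007684485127" by (rule mr_sub[OF n25 n26]) simp
  have n28: "\<bar>Re (d^5) - (- 0.769065887616)\<bar> \<le> 0.000007684485127" by (rule mr_eq[OF _ n27]) (use Re_pow_Suc[of d 4] in simp)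
  have n29: "\<bar>Re (d^4) * Im d - (- 0.11750912302)\<bar> \<le> 0.000001622636739" by (rule mr_mul[OF n20 him]) simp
  have n30: "\<bar>Im (d^4) * Re d - (- 0.521660385409)\<bar> \<le> 0.000006061848549" by (rule mr_mul[OF n24 hre]) simp
  have n31: "\<bar>Re (d^4) * Im d + Im (d^4) * Re d - (- 0.639169508429)\<bar> \<le> 0.000007684485288" by (rule mr_add[OF n29 n30]) simp
  have n32: "\<bar>Im (d^5) - (- 0.639169508429)\<bar> \<le> 0.000007684485288" by (rule mr_eq[OF _ n31]) (use Im_pow_Suc[of d 4] in simp)
  have n33: "\<bar>Re (d^5) * Re d - 0.76168195931\<bar> \<le> 0.000008379778736" by (rule mr_mul[OF n28 hre]) simp
  have n34: "\<bar>Im (d^5) * Im d - 0.08835844509\<bar> \<le> 0.000001701476573" by (rule mr_mul[OF n32 him]) simp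
  have n35: "\<bar>Re (d^5) * Re d - Im (d^5) * Im d - 0.67332351422\<bar> \<le> 0.000010081255309" by (rule mr_sub[OF n33 n34]) simp
  have n36: "\<bar>Re (d^6) - 0.67332351422\<bar> \<le> 0.000010081255309" by (rule mr_eq[OF _ n35]) (use Re_pow_Suc[of d 5] in simp)
  have n37: "\<bar>Re (d^5) * Im d - 0.106315249876\<bar> \<le> 0.00000183137262" by (rule mr_mul[OF n28 him]) simp
  have n38: "\<bar>Im (d^5) * Re d - 0.633032736663\<bar> \<le> 0.000008249882832" by (rule mr_mul[OF n32 hre]) simp
  have n39: "\<bar>Re (d^5) * Im d + Im (d^5) * Re d - 0.739347986539\<bar> \<le> 0.000010081255452" by (rule mr_add[OF n37 n38]) simp
  have n40: "\<bar>Im (d^6) - 0.739347986539\<bar> \<le> 0.000010081255452" by (rule mr_eq[OF _ n39]) (use Im_pow_Suc[of d 5] in simp)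
  have n41: "\<bar>Re (d^6) * Re d - (- 0.666858824216)\<bar> \<le> 0.000010657797598" by (rule mr_mul[OF n36 hre]) simp
  have n42: "\<bar>Im (d^6) * Im d - (- 0.1022070634)\<bar> \<le> 0.000002132985507" by (rule mr_mul[OF n40 him]) simp
  have n43: "\<bar>Re (d^6) * Re d - Im (d^6) * Im d - (- 0.564651760816)\<bar> \<le> 0.000012790783105" by (rule mr_sub[OF n41 n42]) simp
  have n44: "\<bar>Re (d^7) - (- 0.564651760816)\<bar> \<le> 0.000012790783105" by (rule mr_eq[OF _ n43]) (use Re_pow_Suc[of d 6] in simp)
  have n45: "\<bar>Re (d^6) * Im d - (- 0.093079876269)\<bar> \<le> 0.000002066961257" by (rule mr_mul[OF n36 him]) simp
  have n46: "\<bar>Im (d^6) * Re d - (- 0.732249384698)\<bar> \<le> 0.000010723821823" by (rule mr_mul[OF n40 hre]) simp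
  have n47: "\<bar>Re (d^6) * Im d + Im (d^6) * Re d - (- 0.825329260967)\<bar> \<le> 0.00001279078308" by (rule mr_add[OF n45 n46]) simp
  have n48: "\<bar>Im (d^7) - (- 0.825329260967)\<bar> \<le> 0.00001279078308" by (rule mr_eq[OF _ n47]) (use Im_pow_Suc[of d 6] in simp)
  have n49: "\<bar>Re (d^7) * Re d - 0.559230446223\<bar> \<le> 0.000013232641482" by (rule mr_mul[OF n44 hre]) simp
  have n50: "\<bar>Im (d^7) * Im d - 0.114093067997\<bar> \<le> 0.000002593533285" by (rule mr_mul[OF n48 him]) simp
  have n51: "\<bar>Re (d^7) * Re d - Im (d^7) * Im d - 0.445137378226\<bar> \<le> 0.000015826174767" by (rule mr_sub[OF n49 n50]) simp
  have n52: "\<bar>Re (d^8) - 0.445137378226\<bar> \<le> 0.000015826174767" by (rule mr_eq[OF _ n51]) (use Re_pow_Suc[of d 7] in simp)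
  have n53: "\<bar>Re (d^7) * Im d - 0.078057152203\<bar> \<le> 0.000002332855842" by (rule mr_mul[OF n44 him]) simp
  have n54: "\<bar>Im (d^7) * Re d - 0.817405138743\<bar> \<le> 0.000013493318728" by (rule mr_mul[OF n48 hre]) simp
  have n55: "\<bar>Re (d^7) * Im d + Im (d^7) * Re d - 0.895462290946\<bar> \<le> 0.00001582617457" by (rule mr_add[OF n53 n54]) simp
  have n56: "\<bar>Im (d^8) - 0.895462290946\<bar> \<le> 0.00001582617457" by (rule mr_eq[OF _ n55]) (use Im_pow_Suc[of d 7] in simp)
  have n57: "\<bar>Re (d^8) * Re d - (- 0.440863540912)\<bar> \<le> 0.000016119378645" by (rule mr_mul[OF n52 hre]) simp
  have n58: "\<bar>Im (d^8) * Im d - (- 0.123788219903)\<bar> \<le> 0.000003083280346" by (rule mr_mul[OF n56 him]) simp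
  have n59: "\<bar>Re (d^8) * Re d - Im (d^8) * Im d - (- 0.317075321009)\<bar> \<le> 0.000019202658991" by (rule mr_sub[OF n57 n58]) simp
  have n60: "\<bar>Re (d^9) - (- 0.317075321009)\<bar> \<le> 0.000019202658991" by (rule mr_eq[OF _ n59]) (use Re_pow_Suc[of d 8] in simp)
  have n61: "\<bar>Re (d^8) * Im d - (- 0.061535548979)\<bar> \<le> 0.000002632955287" by (rule mr_mul[OF n52 him]) simp
  have n62: "\<bar>Im (d^8) * Re d - (- 0.886864809945)\<bar> \<le> 0.000016569703321" by (rule mr_mul[OF n56 hre]) simp
  have n63: "\<bar>Re (d^8) * Im d + Im (d^8) * Re d - (- 0.948400358924)\<bar> \<le> 0.000019202658608" by (rule mr_add[OF n61 n62]) simp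
  have n64: "\<bar>Im (d^9) - (- 0.948400358924)\<bar> \<le> 0.000019202658608" by (rule mr_eq[OF _ n63]) (use Im_pow_Suc[of d 8] in simp)
  have n65: "\<bar>Re (d^9) * Re d - 0.314031028608\<bar> \<le> 0.000019335386117" by (rule mr_mul[OF n60 hre]) simp
  have n66: "\<bar>Im (d^9) * Im d - 0.131106349619\<bar> \<le> 0.000003602985072" by (rule mr_mul[OF n64 him]) simp
  have n67: "\<bar>Re (d^9) * Re d - Im (d^9) * Im d - 0.182924678989\<bar> \<le> 0.000022938371189" by (rule mr_sub[OF n65 n66]) simp
  have n68: "\<bar>Re (d^10) - 0.182924678989\<bar> \<le> 0.000022938371189" by (rule mr_eq[OF _ n67]) (use Re_pow_Suc[of d 9] in simp)
  have n69: "\<bar>Re (d^9) * Im d - 0.043832319864\<bar> \<le> 0.000002971659799" by (rule mr_mul[OF n60 him]) simp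
  have n70: "\<bar>Im (d^9) * Re d - 0.93929461081\<bar> \<le> 0.000019966710364" by (rule mr_mul[OF n64 hre]) simp
  have n71: "\<bar>Re (d^9) * Im d + Im (d^9) * Re d - 0.983126930674\<bar> \<le> 0.000022938370163" by (rule mr_add[OF n69 n70]) simp
  have n72: "\<bar>Im (d^10) - 0.983126930674\<bar> \<le> 0.000022938370163" by (rule mr_eq[OF _ n71]) (use Im_pow_Suc[of d 9] in simp)
  have n73: "\<bar>Re (d^10) * Re d - (- 0.181168389006)\<bar> \<le> 0.000022901084191" by (rule mr_mul[OF n68 hre]) simp
  have n74: "\<bar>Im (d^10) * Im d - (- 0.135906932003)\<bar> \<le> 0.000004154138177" by (rule mr_mul[OF n72 him]) simp
  have n75: "\<bar>Re (d^10) * Re d - Im (d^10) * Im d - (- 0.045261457003)\<bar> \<le> 0.000027055222368" by (rule mr_sub[OF n73 n74]) simp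
  have n76: "\<bar>Re (d^11) - (- 0.045261457003)\<bar> \<le> 0.000027055222368" by (rule mr_eq[OF _ n75]) (use Re_pow_Suc[of d 10] in simp)
  have n77: "\<bar>Re (d^10) * Im d - (- 0.025287408099)\<bar> \<le> 0.00000335393562" by (rule mr_mul[OF n68 him]) simp
  have n78: "\<bar>Im (d^10) * Re d - (- 0.973687767023)\<bar> \<le> 0.000023701285145" by (rule mr_mul[OF n72 hre]) simp
  have n79: "\<bar>Re (d^10) * Im d + Im (d^10) * Re d - (- 0.998975175122)\<bar> \<le> 0.000027055220765" by (rule mr_add[OF n77 n78]) simp
  have n80: "\<bar>Im (d^11) - (- 0.998975175122)\<bar> \<le> 0.000027055220765" by (rule mr_eq[OF _ n79]) (use Im_pow_Suc[of d 10] in simp)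
  have n81: "\<bar>Re (d^11) * Re d - 0.044826894297\<bar> \<le> 0.000026840749647" by (rule mr_mul[OF n76 hre]) simp
  have n82: "\<bar>Im (d^11) * Im d - 0.138097784693\<bar> \<le> 0.000004739101614" by (rule mr_mul[OF n80 him]) simp
  have n83: "\<bar>Re (d^11) * Re d - Im (d^11) * Im d - (- 0.093270890396)\<bar> \<le> 0.000031579851261" by (rule mr_sub[OF n81 n82]) simp
  have n84: "\<bar>Re (d^12) - (- 0.093270890396)\<bar> \<le> 0.000031579851261" by (rule mr_eq[OF _ n83]) (use Re_pow_Suc[of d 11] in simp)
  have n85: "\<bar>Re (d^11) * Im d - 0.006256919191\<bar> \<le> 0.000003785388178" by (rule mr_mul[OF n76 him]) simp
  have n86: "\<bar>Im (d^11) * Re d - 0.989383849865\<bar> \<le> 0.000027794461807" by (rule mr_mul[OF n80 hre]) simp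
  have n87: "\<bar>Re (d^11) * Im d + Im (d^11) * Re d - 0.995640769056\<bar> \<le> 0.000031579849985" by (rule mr_add[OF n85 n86]) simp
  have n88: "\<bar>Im (d^12) - 0.995640769056\<bar> \<le> 0.000031579849985" by (rule mr_eq[OF _ n87]) (use Im_pow_Suc[of d 11] in simp)
  have n89: "\<bar>Re (d^12) * Re d - 0.092375381209\<bar> \<le> 0.000031369950444" by (rule mr_mul[OF n84 hre]) simp
  have n90: "\<bar>Im (d^12) * Im d - (- 0.137636838213)\<bar> \<le> 0.000005361253648" by (rule mr_mul[OF n88 him]) simp
  have n91: "\<bar>Re (d^12) * Re d - Im (d^12) * Im d - 0.230012219422\<bar> \<le> 0.000036731204092" by (rule mr_sub[OF n89 n90]) simp
  have n92: "\<bar>Re (d^13) - 0.230012219422\<bar> \<le> 0.000036731204092" by (rule mr_eq[OF _ n91]) (use Re_pow_Suc[of d 12] in simp)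
  have n93: "\<bar>Re (d^12) * Im d - 0.012893717142\<bar> \<le> 0.000004458884092" by (rule mr_mul[OF n84 him]) simp
  have n94: "\<bar>Im (d^12) * Re d - (- 0.986081457981)\<bar> \<le> 0.000032272319386" by (rule mr_mul[OF n88 hre]) simp
  have n95: "\<bar>Re (d^12) * Im d + Im (d^12) * Re d - (- 0.973187740839)\<bar> \<le> 0.000036731203478" by (rule mr_add[OF n93 n94]) simp
  have n96: "\<bar>Im (d^13) - (- 0.973187740839)\<bar> \<le> 0.000036731203478" by (rule mr_eq[OF _ n95]) (use Im_pow_Suc[of d 12] in simp)
  have n97: "\<bar>Re (d^13) - Re (d^10) - 0.047087540433\<bar> \<le> 0.000059669575281" by (rule mr_sub[OF n92 n68]) simp
  have n98: "\<bar>Re (d^13) - Re (d^10) - Re (d^9) - 0.364162861442\<bar> \<le> 0.000078872234272" by (rule mr_sub[OF n97 n60]) simp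
  have n99: "\<bar>Re (d^13) - Re (d^10) - Re (d^9) + Re (d^6) - 1.037486375662\<bar> \<le> 0.000088953489581" by (rule mr_add[OF n98 n36]) simp
  have n100: "\<bar>Re (d^13) - Re (d^10) - Re (d^9) + Re (d^6) - Re (d^3) - 1.95217854088\<bar> \<le> 0.000092736750043" by (rule mr_sub[OF n99 n12]) simp
  have n101: "\<bar>Re (d^13) - Re (d^10) - Re (d^9) + Re (d^6) - Re (d^3) - Re (d^2) - 0.99039883523\<bar> \<le> 0.000094994028674" by (rule mr_sub[OF n100 n4]) simp
  have n102: "\<bar>Re (wl d ! 0) - 0.99039883523\<bar> \<le> 0.000094994028674" by (rule mr_eq[OF _ n101]) (simp add: wl_def)
  have n103: "\<bar>Im (d^13) - Im (d^10) - (- 1.956314671513)\<bar> \<le> 0.000059669573641" by (rule mr_sub[OF n96 n72]) simp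
  have n104: "\<bar>Im (d^13) - Im (d^10) - Im (d^9) - (- 1.007914312589)\<bar> \<le> 0.000078872232249" by (rule mr_sub[OF n103 n64]) simp
  have n105: "\<bar>Im (d^13) - Im (d^10) - Im (d^9) + Im (d^6) - (- 0.26856632605)\<bar> \<le> 0.000088953487701" by (rule mr_add[OF n104 n40]) simp
  have n106: "\<bar>Im (d^13) - Im (d^10) - Im (d^9) + Im (d^6) - Im (d^3) - 0.135584936339\<bar> \<le> 0.000092736748162" by (rule mr_sub[OF n105 n16]) simp
  have n107: "\<bar>Im (d^13) - Im (d^10) - Im (d^9) + Im (d^6) - Im (d^3) - Im (d^2) - (- 0.138239455927)\<bar> \<le> 0.000094994026994" by (rule mr_sub[OF n106 n8]) simp
  have n108: "\<bar>Im (wl d ! 0) - (- 0.138239455927)\<bar> \<le> 0.000094994026994" by (rule mr_eq[OF _ n107]) (simp add: wl_def)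
  have n109: "\<bar>Re (d^12) - Re (d^9) - 0.223804430613\<bar> \<le> 0.000050782510252" by (rule mr_sub[OF n84 n60]) simp
  have n110: "\<bar>Re (d^12) - Re (d^9) - Re (d^8) - (- 0.221332947613)\<bar> \<le> 0.000066608685019" by (rule mr_sub[OF n109 n52]) simp
  have n111: "\<bar>Re (d^12) - Re (d^9) - Re (d^8) + Re (d^5) - (- 0.990398835229)\<bar> \<le> 0.000074293170146" by (rule mr_add[OF n110 n28]) simp
  have n112: "\<bar>Re (d^12) - Re (d^9) - Re (d^8) + Re (d^5) - Re (d^2) - (- 1.952178540879)\<bar> \<le> 0.000076550448777" by (rule mr_sub[OF n111 n4]) simp
  have n113: "\<bar>Re (d^12) - Re (d^9) - Re (d^8) + Re (d^5) - Re (d^2) - Re d - (- 0.961779705649)\<bar> \<le> 0.000077550448819" by (rule mr_sub[OF n112 hre]) simp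
  have n114: "\<bar>Re (wl d ! 1) - (- 0.961779705649)\<bar> \<le> 0.000077550448819" by (rule mr_eq[OF _ n113]) (simp add: wl_def)
  have n115: "\<bar>Im (d^12) - Im (d^9) - 1.94404112798\<bar> \<le> 0.000050782508593" by (rule mr_sub[OF n88 n64]) simp
  have n116: "\<bar>Im (d^12) - Im (d^9) - Im (d^8) - 1.048578837034\<bar> \<le> 0.000066608683163" by (rule mr_sub[OF n115 n56]) simp
  have n117: "\<bar>Im (d^12) - Im (d^9) - Im (d^8) + Im (d^5) - 0.409409328605\<bar> \<le> 0.000074293168451" by (rule mr_add[OF n116 n32]) simp
  have n118: "\<bar>Im (d^12) - Im (d^9) - Im (d^8) + Im (d^5) - Im (d^2) - 0.135584936339\<bar> \<le> 0.000076550447283" by (rule mr_sub[OF n117 n8]) simp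
  have n119: "\<bar>Im (d^12) - Im (d^9) - Im (d^8) + Im (d^5) - Im (d^2) - Im d - 0.273824392266\<bar> \<le> 0.000077550447344" by (rule mr_sub[OF n118 him]) simp
  have n120: "\<bar>Im (wl d ! 1) - 0.273824392266\<bar> \<le> 0.000077550447344" by (rule mr_eq[OF _ n119]) (simp add: wl_def)
  have n121: "\<bar>Re (d^11) - Re (d^8) - (- 0.490398835229)\<bar> \<le> 0.000042881397135" by (rule mr_sub[OF n76 n52]) simp
  have n122: "\<bar>Re (d^11) - Re (d^8) - Re (d^7) - 0.074252925587\<bar> \<le> 0.00005567218024" by (rule mr_sub[OF n121 n44]) simp
  have n123: "\<bar>Re (d^11) - Re (d^8) - Re (d^7) + Re (d^4) - 0.924293329988\<bar> \<le> 0.000061260964065" by (rule mr_add[OF n122 n20]) simp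
  have n124: "\<bar>Re (d^11) - Re (d^8) - Re (d^7) + Re (d^4) - Re d - 1.914692165218\<bar> \<le> 0.000062260964107" by (rule mr_sub[OF n123 hre]) simp
  have n125: "\<bar>Re (d^11) - Re (d^8) - Re (d^7) + Re (d^4) - Re d - 1 - 0.914692165218\<bar> \<le> 0.000062260964107" by (rule mr_sub[OF n124 hone]) simp
  have n126: "\<bar>Re (wl d ! 2) - 0.914692165218\<bar> \<le> 0.000062260964107" by (rule mr_eq[OF _ n125]) (simp add: wl_def)
  have n127: "\<bar>Im (d^11) - Im (d^8) - (- 1.894437466068)\<bar> \<le> 0.000042881395335" by (rule mr_sub[OF n80 n56]) simp
  have n128: "\<bar>Im (d^11) - Im (d^8) - Im (d^7) - (- 1.069108205101)\<bar> \<le> 0.000055672178415" by (rule mr_sub[OF n127 n48]) simp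
  have n129: "\<bar>Im (d^11) - Im (d^8) - Im (d^7) + Im (d^4) - (- 0.542390718314)\<bar> \<le> 0.000061260962586" by (rule mr_add[OF n128 n24]) simp
  have n130: "\<bar>Im (d^11) - Im (d^8) - Im (d^7) + Im (d^4) - Im d - (- 0.404151262387)\<bar> \<le> 0.000062260962647" by (rule mr_sub[OF n129 him]) simp
  have n131: "\<bar>Im (wl d ! 2) - (- 0.404151262387)\<bar> \<le> 0.000062260962647" by (rule mr_eq[OF _ n130]) (simp add: wl_def)
  have n132: "\<bar>Re (d^10) - Re (d^7) - 0.747576439805\<bar> \<le> 0.000035729154294" by (rule mr_sub[OF n68 n44]) simp
  have n133: "\<bar>Re (d^10) - Re (d^7) - Re (d^6) - 0.074252925585\<bar> \<le> 0.000045810409603" by (rule mr_sub[OF n132 n36]) simp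
  have n134: "\<bar>Re (d^10) - Re (d^7) - Re (d^6) + Re (d^3) - (- 0.840439239633)\<bar> \<le> 0.000049593670065" by (rule mr_add[OF n133 n12]) simp
  have n135: "\<bar>Re (d^10) - Re (d^7) - Re (d^6) + Re (d^3) - 1 - (- 1.840439239633)\<bar> \<le> 0.000049593670065" by (rule mr_sub[OF n134 hone]) simp
  have n136: "\<bar>Re (wl d ! 3) - (- 1.840439239633)\<bar> \<le> 0.000049593670065" by (rule mr_eq[OF _ n135]) (simp add: wl_def)
  have n137: "\<bar>Im (d^10) - Im (d^7) - 1.808456191641\<bar> \<le> 0.000035729153243" by (rule mr_sub[OF n72 n48]) simp
  have n138: "\<bar>Im (d^10) - Im (d^7) - Im (d^6) - 1.069108205102\<bar> \<le> 0.000045810408695" by (rule mr_sub[OF n137 n40]) simp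
  have n139: "\<bar>Im (d^10) - Im (d^7) - Im (d^6) + Im (d^3) - 0.664956942713\<bar> \<le> 0.000049593669156" by (rule mr_add[OF n138 n16]) simp
  have n140: "\<bar>Im (wl d ! 3) - 0.664956942713\<bar> \<le> 0.000049593669156" by (rule mr_eq[OF _ n139]) (simp add: wl_def)
  have n141: "\<bar>Re (d^9) - Re (d^6) - (- 0.990398835229)\<bar> \<le> 0.0000292839143" by (rule mr_sub[OF n60 n36]) simp
  have n142: "\<bar>Re (d^9) - Re (d^6) - Re (d^5) - (- 0.221332947613)\<bar> \<le> 0.000036968399427" by (rule mr_sub[OF n141 n28]) simp
  have n143: "\<bar>Re (d^9) - Re (d^6) - Re (d^5) + Re (d^2) - 0.740446758037\<bar> \<le> 0.000039225678058" by (rule mr_add[OF n142 n4]) simp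
  have n144: "\<bar>Re (wl d ! 4) - 0.740446758037\<bar> \<le> 0.000039225678058" by (rule mr_eq[OF _ n143]) (simp add: wl_def)
  have n145: "\<bar>Im (d^9) - Im (d^6) - (- 1.687748345463)\<bar> \<le> 0.00002928391406" by (rule mr_sub[OF n64 n40]) simp
  have n146: "\<bar>Im (d^9) - Im (d^6) - Im (d^5) - (- 1.048578837034)\<bar> \<le> 0.000036968399348" by (rule mr_sub[OF n145 n32]) simp
  have n147: "\<bar>Im (d^9) - Im (d^6) - Im (d^5) + Im (d^2) - (- 0.774754444768)\<bar> \<le> 0.00003922567818" by (rule mr_add[OF n146 n8]) simp
  have n148: "\<bar>Im (wl d ! 4) - (- 0.774754444768)\<bar> \<le> 0.00003922567818" by (rule mr_eq[OF _ n147]) (simp add: wl_def)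
  have n149: "\<bar>Re (d^8) - Re (d^5) - 1.214203265842\<bar> \<le> 0.000023510659894" by (rule mr_sub[OF n52 n28]) simp
  have n150: "\<bar>Re (d^8) - Re (d^5) - Re (d^4) - 0.364162861441\<bar> \<le> 0.000029099443719" by (rule mr_sub[OF n149 n20]) simp
  have n151: "\<bar>Re (d^8) - Re (d^5) - Re (d^4) + Re d - (- 0.626235973789)\<bar> \<le> 0.000030099443761" by (rule mr_add[OF n150 hre]) simp
  have n152: "\<bar>Re (wl d ! 5) - (- 0.626235973789)\<bar> \<le> 0.000030099443761" by (rule mr_eq[OF _ n151]) (simp add: wl_def)
  have n153: "\<bar>Im (d^8) - Im (d^5) - 1.534631799375\<bar> \<le> 0.000023510659858" by (rule mr_sub[OF n56 n32]) simp
  have n154: "\<bar>Im (d^8) - Im (d^5) - Im (d^4) - 1.007914312588\<bar> \<le> 0.000029099444029" by (rule mr_sub[OF n153 n24]) simp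
  have n155: "\<bar>Im (d^8) - Im (d^5) - Im (d^4) + Im d - 0.869674856661\<bar> \<le> 0.00003009944409" by (rule mr_add[OF n154 him]) simp
  have n156: "\<bar>Im (wl d ! 5) - 0.869674856661\<bar> \<le> 0.00003009944409" by (rule mr_eq[OF _ n155]) (simp add: wl_def)
  have n157: "\<bar>Re (d^7) - Re (d^4) - (- 1.414692165217)\<bar> \<le> 0.00001837956693" by (rule mr_sub[OF n44 n20]) simp
  have n158: "\<bar>Re (d^7) - Re (d^4) - Re (d^3) - (- 0.499999999999)\<bar> \<le> 0.000022162827392" by (rule mr_sub[OF n157 n12]) simp
  have n159: "\<bar>Re (d^7) - Re (d^4) - Re (d^3) + 1 - 0.500000000001\<bar> \<le> 0.000022162827392" by (rule mr_add[OF n158 hone]) simp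
  have n160: "\<bar>Re (wl d ! 6) - 0.500000000001\<bar> \<le> 0.000022162827392" by (rule mr_eq[OF _ n159]) (simp add: wl_def)
  have n161: "\<bar>Im (d^7) - Im (d^4) - (- 1.352046747754)\<bar> \<le> 0.000018379567251" by (rule mr_sub[OF n48 n24]) simp
  have n162: "\<bar>Im (d^7) - Im (d^4) - Im (d^3) - (- 0.947895485365)\<bar> \<le> 0.000022162827712" by (rule mr_sub[OF n161 n16]) simp
  have n163: "\<bar>Im (wl d ! 6) - (- 0.947895485365)\<bar> \<le> 0.000022162827712" by (rule mr_eq[OF _ n162]) (simp add: wl_def)
  have n164: "\<bar>Re (d^6) - Re (d^3) - 1.588015679438\<bar> \<le> 0.000013864515771" by (rule mr_sub[OF n36 n12]) simp
  have n165: "\<bar>Re (d^6) - Re (d^3) - Re (d^2) - 0.626235973788\<bar> \<le> 0.000016121794402" by (rule mr_sub[OF n164 n4]) simp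
  have n166: "\<bar>Re (wl d ! 7) - 0.626235973788\<bar> \<le> 0.000016121794402" by (rule mr_eq[OF _ n165]) (simp add: wl_def)
  have n167: "\<bar>Im (d^6) - Im (d^3) - 1.143499248928\<bar> \<le> 0.000013864515913" by (rule mr_sub[OF n40 n16]) simp
  have n168: "\<bar>Im (d^6) - Im (d^3) - Im (d^2) - 0.869674856662\<bar> \<le> 0.000016121794745" by (rule mr_sub[OF n167 n8]) simp
  have n169: "\<bar>Im (wl d ! 7) - 0.869674856662\<bar> \<le> 0.000016121794745" by (rule mr_eq[OF _ n168]) (simp add: wl_def)
  have n170: "\<bar>Re (d^5) - Re (d^2) - (- 1.730845593266)\<bar> \<le> 0.000009941763758" by (rule mr_sub[OF n28 n4]) simp
  have n171: "\<bar>Re (d^5) - Re (d^2) - Re d - (- 0.740446758036)\<bar> \<le> 0.0000109417638" by (rule mr_sub[OF n170 hre]) simp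
  have n172: "\<bar>Re (wl d ! 8) - (- 0.740446758036)\<bar> \<le> 0.0000109417638" by (rule mr_eq[OF _ n171]) (simp add: wl_def)
  have n173: "\<bar>Im (d^5) - Im (d^2) - (- 0.912993900695)\<bar> \<le> 0.00000994176412" by (rule mr_sub[OF n32 n8]) simp
  have n174: "\<bar>Im (d^5) - Im (d^2) - Im d - (- 0.774754444768)\<bar> \<le> 0.000010941764181" by (rule mr_sub[OF n173 him]) simp
  have n175: "\<bar>Im (wl d ! 8) - (- 0.774754444768)\<bar> \<le> 0.000010941764181" by (rule mr_eq[OF _ n174]) (simp add: wl_def)
  have n176: "\<bar>Re (d^4) - Re d - 1.840439239631\<bar> \<le> 0.000006588783867" by (rule mr_sub[OF n20 hre]) simp
  have n177: "\<bar>Re (d^4) - Re d - 1 - 0.840439239631\<bar> \<le> 0.000006588783867" by (rule mr_sub[OF n176 hone]) simp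
  have n178: "\<bar>Re (wl d ! 9) - 0.840439239631\<bar> \<le> 0.000006588783867" by (rule mr_eq[OF _ n177]) (simp add: wl_def)
  have n179: "\<bar>Im (d^4) - Im d - 0.664956942714\<bar> \<le> 0.000006588784232" by (rule mr_sub[OF n24 him]) simp
  have n180: "\<bar>Im (wl d ! 9) - 0.664956942714\<bar> \<le> 0.000006588784232" by (rule mr_eq[OF _ n179]) (simp add: wl_def)
  have n181: "\<bar>Re (d^3) - 1 - (- 1.914692165218)\<bar> \<le> 0.000003783260462" by (rule mr_sub[OF n12 hone]) simp
  have n182: "\<bar>Re (wl d ! 10) - (- 1.914692165218)\<bar> \<le> 0.000003783260462" by (rule mr_eq[OF _ n181]) (simp add: wl_def)
  have n183: "\<bar>Im (wl d ! 10) - (- 0.404151262389)\<bar> \<le> 0.000003783260461" by (rule mr_eq[OF _ n16]) (simp add: wl_def)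
  have n184: "\<bar>Re (wl d ! 11) - 0.96177970565\<bar> \<le> 0.000002257278631" by (rule mr_eq[OF _ n4]) (simp add: wl_def)
  have n185: "\<bar>Im (wl d ! 11) - 0.273824392266\<bar> \<le> 0.000002257278832" by (rule mr_eq[OF _ n8]) (simp add: wl_def)
  have n186: "\<bar>Re (wl d ! 12) - (- 0.9903988352300419)\<bar> \<le> 0.000001" by (rule mr_eq[OF _ hre]) (simp add: wl_def)
  have n187: "\<bar>Im (wl d ! 12) - (- 0.13823945592693967)\<bar> \<le> 0.000001" by (rule mr_eq[OF _ him]) (simp add: wl_def)
  have n188: "\<bar>Re (wl d ! 13) - 1\<bar> \<le> 0" by (rule mr_eq[OF _ hone]) (simp add: wl_def)
  have n189: "\<bar>Im (wl d ! 13) - 0\<bar> \<le> 0" by (simp add: wl_def)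
  have n190: "\<bar>2 * Re (wl d ! 12) - (- 1.98079767046)\<bar> \<le> 0.000002000000084" by (rule mr_cmul[OF n186]) simp
  have n191: "\<bar>2 * Re (wl d ! 13) - 2\<bar> \<le> 0" by (rule mr_cmul[OF n188]) simp
  have n192: "\<bar>Re (wl d ! 2) + Re (wl d ! 4) - 1.655138923255\<bar> \<le> 0.000101486642165" by (rule mr_add[OF n126 n144]) simp
  have n193: "\<bar>Re (wl d ! 2) + Re (wl d ! 4) + Re (wl d ! 6) - 2.155138923256\<bar> \<le> 0.000123649469557" by (rule mr_add[OF n192 n160]) simp
  have n194: "\<bar>Re (wl d ! 2) + Re (wl d ! 4) + Re (wl d ! 6) + Re (wl d ! 7) - 2.781374897044\<bar> \<le> 0.000139771263959" by (rule mr_add[OF n193 n166]) simp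
  have n195: "\<bar>Re (wl d ! 2) + Re (wl d ! 4) + Re (wl d ! 6) + Re (wl d ! 7) + Re (wl d ! 8) - 2.040928139008\<bar> \<le> 0.000150713027759" by (rule mr_add[OF n194 n172]) simp
  have n196: "\<bar>Re (wl d ! 2) + Re (wl d ! 4) + Re (wl d ! 6) + Re (wl d ! 7) + Re (wl d ! 8) + Re (wl d ! 9) - 2.881367378639\<bar> \<le> 0.000157301811626" by (rule mr_add[OF n195 n178]) simp
  have n197: "\<bar>Re (wl d ! 2) + Re (wl d ! 4) + Re (wl d ! 6) + Re (wl d ! 7) + Re (wl d ! 8) + Re (wl d ! 9) + Re (wl d ! 10) - 0.966675213421\<bar> \<le> 0.000161085072088" by (rule mr_add[OF n196 n182]) simp
  have n198: "\<bar>Re (wl d ! 2) + Re (wl d ! 4) + Re (wl d ! 6) + Re (wl d ! 7) + Re (wl d ! 8) + Re (wl d ! 9) + Re (wl d ! 10) + Re (wl d ! 11) - 1.928454919071\<bar> \<le> 0.000163342350719" by (rule mr_add[OF n197 n184]) simp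
  have n199: "\<bar>Re (wl d ! 2) + Re (wl d ! 4) + Re (wl d ! 6) + Re (wl d ! 7) + Re (wl d ! 8) + Re (wl d ! 9) + Re (wl d ! 10) + Re (wl d ! 11) + 2 * Re (wl d ! 12) - (- 0.052342751389)\<bar> \<le> 0.000165342350803" by (rule mr_add[OF n198 n190]) simp
  have n200: "\<bar>Re (wl d ! 2) + Re (wl d ! 4) + Re (wl d ! 6) + Re (wl d ! 7) + Re (wl d ! 8) + Re (wl d ! 9) + Re (wl d ! 10) + Re (wl d ! 11) + 2 * Re (wl d ! 12) + 2 * Re (wl d ! 13) - 1.947657248611\<bar> \<le> 0.000165342350803" by (rule mr_add[OF n199 n191]) simp
  have n201: "\<bar>Yr 0 - 1.947657248611\<bar> \<le> 0.000165342350803" by (rule mr_eq[OF _ n200]) (simp add: Yr_def lessThan_nat_numeral G14l_def algebra_simps)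
  have n202: "\<bar>2 * Re (wl d ! 13) - 2\<bar> \<le> 0" by (rule mr_cmul[OF n188]) simp
  have n203: "\<bar>Re (wl d ! 3) + Re (wl d ! 5) - (- 2.466675213422)\<bar> \<le> 0.000079693113826" by (rule mr_add[OF n136 n152]) simp
  have n204: "\<bar>Re (wl d ! 3) + Re (wl d ! 5) + Re (wl d ! 7) - (- 1.840439239634)\<bar> \<le> 0.000095814908228" by (rule mr_add[OF n203 n166]) simp
  have n205: "\<bar>Re (wl d ! 3) + Re (wl d ! 5) + Re (wl d ! 7) + Re (wl d ! 8) - (- 2.58088599767)\<bar> \<le> 0.000106756672028" by (rule mr_add[OF n204 n172]) simp
  have n206: "\<bar>Re (wl d ! 3) + Re (wl d ! 5) + Re (wl d ! 7) + Re (wl d ! 8) + Re (wl d ! 9) - (- 1.740446758039)\<bar> \<le> 0.000113345455895" by (rule mr_add[OF n205 n178]) simp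
  have n207: "\<bar>Re (wl d ! 3) + Re (wl d ! 5) + Re (wl d ! 7) + Re (wl d ! 8) + Re (wl d ! 9) + Re (wl d ! 10) - (- 3.655138923257)\<bar> \<le> 0.000117128716357" by (rule mr_add[OF n206 n182]) simp
  have n208: "\<bar>Re (wl d ! 3) + Re (wl d ! 5) + Re (wl d ! 7) + Re (wl d ! 8) + Re (wl d ! 9) + Re (wl d ! 10) + Re (wl d ! 11) - (- 2.693359217607)\<bar> \<le> 0.000119385994988" by (rule mr_add[OF n207 n184]) simp
  have n209: "\<bar>Re (wl d ! 3) + Re (wl d ! 5) + Re (wl d ! 7) + Re (wl d ! 8) + Re (wl d ! 9) + Re (wl d ! 10) + Re (wl d ! 11) + Re (wl d ! 12) - (- 3.683758052837)\<bar> \<le> 0.00012038599503" by (rule mr_add[OF n208 n186]) simp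
  have n210: "\<bar>Re (wl d ! 3) + Re (wl d ! 5) + Re (wl d ! 7) + Re (wl d ! 8) + Re (wl d ! 9) + Re (wl d ! 10) + Re (wl d ! 11) + Re (wl d ! 12) + 2 * Re (wl d ! 13) - (- 1.683758052837)\<bar> \<le> 0.00012038599503" by (rule mr_add[OF n209 n202]) simp
  have n211: "\<bar>Yr 1 - (- 1.683758052837)\<bar> \<le> 0.00012038599503" by (rule mr_eq[OF _ n210]) (simp add: Yr_def lessThan_nat_numeral G14l_def algebra_simps)
  have n212: "\<bar>Re (wl d ! 0) + Re (wl d ! 4) - 1.730845593267\<bar> \<le> 0.000134219706732" by (rule mr_add[OF n102 n144]) simp
  have n213: "\<bar>Re (wl d ! 0) + Re (wl d ! 4) + Re (wl d ! 6) - 2.230845593268\<bar> \<le> 0.000156382534124" by (rule mr_add[OF n212 n160]) simp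
  have n214: "\<bar>Re (wl d ! 0) + Re (wl d ! 4) + Re (wl d ! 6) + Re (wl d ! 8) - 1.490398835232\<bar> \<le> 0.000167324297924" by (rule mr_add[OF n213 n172]) simp
  have n215: "\<bar>Re (wl d ! 0) + Re (wl d ! 4) + Re (wl d ! 6) + Re (wl d ! 8) + Re (wl d ! 9) - 2.330838074863\<bar> \<le> 0.000173913081791" by (rule mr_add[OF n214 n178]) simp
  have n216: "\<bar>Re (wl d ! 0) + Re (wl d ! 4) + Re (wl d ! 6) + Re (wl d ! 8) + Re (wl d ! 9) + Re (wl d ! 10) - 0.416145909645\<bar> \<le> 0.000177696342253" by (rule mr_add[OF n215 n182]) simp
  have n217: "\<bar>Re (wl d ! 0) + Re (wl d ! 4) + Re (wl d ! 6) + Re (wl d ! 8) + Re (wl d ! 9) + Re (wl d ! 10) + Re (wl d ! 11) - 1.377925615295\<bar> \<le> 0.000179953620884" by (rule mr_add[OF n216 n184]) simp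
  have n218: "\<bar>Re (wl d ! 0) + Re (wl d ! 4) + Re (wl d ! 6) + Re (wl d ! 8) + Re (wl d ! 9) + Re (wl d ! 10) + Re (wl d ! 11) + Re (wl d ! 12) - 0.387526780065\<bar> \<le> 0.000180953620926" by (rule mr_add[OF n217 n186]) simp
  have n219: "\<bar>Re (wl d ! 0) + Re (wl d ! 4) + Re (wl d ! 6) + Re (wl d ! 8) + Re (wl d ! 9) + Re (wl d ! 10) + Re (wl d ! 11) + Re (wl d ! 12) + Re (wl d ! 13) - 1.387526780065\<bar> \<le> 0.000180953620926" by (rule mr_add[OF n218 n188]) simp
  have n220: "\<bar>Yr 2 - 1.387526780065\<bar> \<le> 0.000180953620926" by (rule mr_eq[OF _ n219]) (simp add: Yr_def lessThan_nat_numeral G14l_def algebra_simps)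
  have n221: "\<bar>Re (wl d ! 1) + Re (wl d ! 5) - (- 1.588015679438)\<bar> \<le> 0.00010764989258" by (rule mr_add[OF n114 n152]) simp
  have n222: "\<bar>Re (wl d ! 1) + Re (wl d ! 5) + Re (wl d ! 7) - (- 0.96177970565)\<bar> \<le> 0.000123771686982" by (rule mr_add[OF n221 n166]) simp
  have n223: "\<bar>Re (wl d ! 1) + Re (wl d ! 5) + Re (wl d ! 7) + Re (wl d ! 9) - (- 0.121340466019)\<bar> \<le> 0.000130360470849" by (rule mr_add[OF n222 n178]) simp
  have n224: "\<bar>Re (wl d ! 1) + Re (wl d ! 5) + Re (wl d ! 7) + Re (wl d ! 9) + Re (wl d ! 10) - (- 2.036032631237)\<bar> \<le> 0.000134143731311" by (rule mr_add[OF n223 n182]) simp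
  have n225: "\<bar>Re (wl d ! 1) + Re (wl d ! 5) + Re (wl d ! 7) + Re (wl d ! 9) + Re (wl d ! 10) + Re (wl d ! 11) - (- 1.074252925587)\<bar> \<le> 0.000136401009942" by (rule mr_add[OF n224 n184]) simp
  have n226: "\<bar>Re (wl d ! 1) + Re (wl d ! 5) + Re (wl d ! 7) + Re (wl d ! 9) + Re (wl d ! 10) + Re (wl d ! 11) + Re (wl d ! 12) - (- 2.064651760817)\<bar> \<le> 0.000137401009984" by (rule mr_add[OF n225 n186]) simp
  have n227: "\<bar>Re (wl d ! 1) + Re (wl d ! 5) + Re (wl d ! 7) + Re (wl d ! 9) + Re (wl d ! 10) + Re (wl d ! 11) + Re (wl d ! 12) + Re (wl d ! 13) - (- 1.064651760817)\<bar> \<le> 0.000137401009984" by (rule mr_add[OF n226 n188]) simp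
  have n228: "\<bar>Yr 3 - (- 1.064651760817)\<bar> \<le> 0.000137401009984" by (rule mr_eq[OF _ n227]) (simp add: Yr_def lessThan_nat_numeral G14l_def algebra_simps)
  have n229: "\<bar>Re (wl d ! 0) + Re (wl d ! 2) - 1.905091000448\<bar> \<le> 0.000157254992781" by (rule mr_add[OF n102 n126]) simp
  have n230: "\<bar>Re (wl d ! 0) + Re (wl d ! 2) + Re (wl d ! 6) - 2.405091000449\<bar> \<le> 0.000179417820173" by (rule mr_add[OF n229 n160]) simp
  have n231: "\<bar>Re (wl d ! 0) + Re (wl d ! 2) + Re (wl d ! 6) + Re (wl d ! 8) - 1.664644242413\<bar> \<le> 0.000190359583973" by (rule mr_add[OF n230 n172]) simp
  have n232: "\<bar>Re (wl d ! 0) + Re (wl d ! 2) + Re (wl d ! 6) + Re (wl d ! 8) + Re (wl d ! 10) - (- 0.250047922805)\<bar> \<le> 0.000194142844435" by (rule mr_add[OF n231 n182]) simp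
  have n233: "\<bar>Re (wl d ! 0) + Re (wl d ! 2) + Re (wl d ! 6) + Re (wl d ! 8) + Re (wl d ! 10) + Re (wl d ! 11) - 0.711731782845\<bar> \<le> 0.000196400123066" by (rule mr_add[OF n232 n184]) simp
  have n234: "\<bar>Re (wl d ! 0) + Re (wl d ! 2) + Re (wl d ! 6) + Re (wl d ! 8) + Re (wl d ! 10) + Re (wl d ! 11) + Re (wl d ! 12) - (- 0.278667052385)\<bar> \<le> 0.000197400123108" by (rule mr_add[OF n233 n186]) simp
  have n235: "\<bar>Re (wl d ! 0) + Re (wl d ! 2) + Re (wl d ! 6) + Re (wl d ! 8) + Re (wl d ! 10) + Re (wl d ! 11) + Re (wl d ! 12) + Re (wl d ! 13) - 0.721332947615\<bar> \<le> 0.000197400123108" by (rule mr_add[OF n234 n188]) simp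
  have n236: "\<bar>Yr 4 - 0.721332947615\<bar> \<le> 0.000197400123108" by (rule mr_eq[OF _ n235]) (simp add: Yr_def lessThan_nat_numeral G14l_def algebra_simps)
  have n237: "\<bar>Re (wl d ! 1) + Re (wl d ! 3) - (- 2.802218945282)\<bar> \<le> 0.000127144118884" by (rule mr_add[OF n114 n136]) simp
  have n238: "\<bar>Re (wl d ! 1) + Re (wl d ! 3) + Re (wl d ! 7) - (- 2.175982971494)\<bar> \<le> 0.000143265913286" by (rule mr_add[OF n237 n166]) simp
  have n239: "\<bar>Re (wl d ! 1) + Re (wl d ! 3) + Re (wl d ! 7) + Re (wl d ! 9) - (- 1.335543731863)\<bar> \<le> 0.000149854697153" by (rule mr_add[OF n238 n178]) simp
  have n240: "\<bar>Re (wl d ! 1) + Re (wl d ! 3) + Re (wl d ! 7) + Re (wl d ! 9) + Re (wl d ! 11) - (- 0.373764026213)\<bar> \<le> 0.000152111975784" by (rule mr_add[OF n239 n184]) simp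
  have n241: "\<bar>Re (wl d ! 1) + Re (wl d ! 3) + Re (wl d ! 7) + Re (wl d ! 9) + Re (wl d ! 11) + Re (wl d ! 12) - (- 1.364162861443)\<bar> \<le> 0.000153111975826" by (rule mr_add[OF n240 n186]) simp
  have n242: "\<bar>Re (wl d ! 1) + Re (wl d ! 3) + Re (wl d ! 7) + Re (wl d ! 9) + Re (wl d ! 11) + Re (wl d ! 12) + Re (wl d ! 13) - (- 0.364162861443)\<bar> \<le> 0.000153111975826" by (rule mr_add[OF n241 n188]) simp
  have n243: "\<bar>Yr 5 - (- 0.364162861443)\<bar> \<le> 0.000153111975826" by (rule mr_eq[OF _ n242]) (simp add: Yr_def lessThan_nat_numeral G14l_def algebra_simps)
  have n244: "\<bar>Re (wl d ! 0) + Re (wl d ! 2) - 1.905091000448\<bar> \<le> 0.000157254992781" by (rule mr_add[OF n102 n126]) simp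
  have n245: "\<bar>Re (wl d ! 0) + Re (wl d ! 2) + Re (wl d ! 4) - 2.645537758485\<bar> \<le> 0.000196480670839" by (rule mr_add[OF n244 n144]) simp
  have n246: "\<bar>Re (wl d ! 0) + Re (wl d ! 2) + Re (wl d ! 4) + Re (wl d ! 8) - 1.905091000449\<bar> \<le> 0.000207422434639" by (rule mr_add[OF n245 n172]) simp
  have n247: "\<bar>Re (wl d ! 0) + Re (wl d ! 2) + Re (wl d ! 4) + Re (wl d ! 8) + Re (wl d ! 10) - (- 0.009601164769)\<bar> \<le> 0.000211205695101" by (rule mr_add[OF n246 n182]) simp
  have n248: "\<bar>Re (wl d ! 0) + Re (wl d ! 2) + Re (wl d ! 4) + Re (wl d ! 8) + Re (wl d ! 10) + Re (wl d ! 12) - (- 0.999999999999)\<bar> \<le> 0.000212205695143" by (rule mr_add[OF n247 n186]) simp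
  have n249: "\<bar>Re (wl d ! 0) + Re (wl d ! 2) + Re (wl d ! 4) + Re (wl d ! 8) + Re (wl d ! 10) + Re (wl d ! 12) + Re (wl d ! 13) - 0.000000000001\<bar> \<le> 0.000212205695143" by (rule mr_add[OF n248 n188]) simp
  have n250: "\<bar>Yr 6 - 0.000000000001\<bar> \<le> 0.000212205695143" by (rule mr_eq[OF _ n249]) (simp add: Yr_def lessThan_nat_numeral G14l_def algebra_simps)
  have n251: "\<bar>Re (wl d ! 0) + Re (wl d ! 1) - 0.028619129581\<bar> \<le> 0.000172544477493" by (rule mr_add[OF n102 n114]) simp
  have n252: "\<bar>Re (wl d ! 0) + Re (wl d ! 1) + Re (wl d ! 3) - (- 1.811820110052)\<bar> \<le> 0.000222138147558" by (rule mr_add[OF n251 n136]) simp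
  have n253: "\<bar>Re (wl d ! 0) + Re (wl d ! 1) + Re (wl d ! 3) + Re (wl d ! 5) - (- 2.438056083841)\<bar> \<le> 0.000252237591319" by (rule mr_add[OF n252 n152]) simp
  have n254: "\<bar>Re (wl d ! 0) + Re (wl d ! 1) + Re (wl d ! 3) + Re (wl d ! 5) + Re (wl d ! 9) - (- 1.59761684421)\<bar> \<le> 0.000258826375186" by (rule mr_add[OF n253 n178]) simp
  have n255: "\<bar>Re (wl d ! 0) + Re (wl d ! 1) + Re (wl d ! 3) + Re (wl d ! 5) + Re (wl d ! 9) + Re (wl d ! 11) - (- 0.63583713856)\<bar> \<le> 0.000261083653817" by (rule mr_add[OF n254 n184]) simp
  have n256: "\<bar>Re (wl d ! 0) + Re (wl d ! 1) + Re (wl d ! 3) + Re (wl d ! 5) + Re (wl d ! 9) + Re (wl d ! 11) + Re (wl d ! 13) - 0.36416286144\<bar> \<le> 0.000261083653817" by (rule mr_add[OF n255 n188]) simp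
  have n257: "\<bar>Yr 7 - 0.36416286144\<bar> \<le> 0.000261083653817" by (rule mr_eq[OF _ n256]) (simp add: Yr_def lessThan_nat_numeral G14l_def algebra_simps)
  have n258: "\<bar>Re (wl d ! 0) + Re (wl d ! 1) - 0.028619129581\<bar> \<le> 0.000172544477493" by (rule mr_add[OF n102 n114]) simp
  have n259: "\<bar>Re (wl d ! 0) + Re (wl d ! 1) + Re (wl d ! 2) - 0.943311294799\<bar> \<le> 0.0002348054416" by (rule mr_add[OF n258 n126]) simp
  have n260: "\<bar>Re (wl d ! 0) + Re (wl d ! 1) + Re (wl d ! 2) + Re (wl d ! 4) - 1.683758052836\<bar> \<le> 0.000274031119658" by (rule mr_add[OF n259 n144]) simp
  have n261: "\<bar>Re (wl d ! 0) + Re (wl d ! 1) + Re (wl d ! 2) + Re (wl d ! 4) + Re (wl d ! 6) - 2.183758052837\<bar> \<le> 0.00029619394705" by (rule mr_add[OF n260 n160]) simp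
  have n262: "\<bar>Re (wl d ! 0) + Re (wl d ! 1) + Re (wl d ! 2) + Re (wl d ! 4) + Re (wl d ! 6) + Re (wl d ! 10) - 0.269065887619\<bar> \<le> 0.000299977207512" by (rule mr_add[OF n261 n182]) simp
  have n263: "\<bar>Re (wl d ! 0) + Re (wl d ! 1) + Re (wl d ! 2) + Re (wl d ! 4) + Re (wl d ! 6) + Re (wl d ! 10) + Re (wl d ! 12) - (- 0.721332947611)\<bar> \<le> 0.000300977207554" by (rule mr_add[OF n262 n186]) simp
  have n264: "\<bar>Yr 8 - (- 0.721332947611)\<bar> \<le> 0.000300977207554" by (rule mr_eq[OF _ n263]) (simp add: Yr_def lessThan_nat_numeral G14l_def algebra_simps)
  have n265: "\<bar>Re (wl d ! 0) + Re (wl d ! 1) - 0.028619129581\<bar> \<le> 0.000172544477493" by (rule mr_add[OF n102 n114]) simp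
  have n266: "\<bar>Re (wl d ! 0) + Re (wl d ! 1) + Re (wl d ! 2) - 0.943311294799\<bar> \<le> 0.0002348054416" by (rule mr_add[OF n265 n126]) simp
  have n267: "\<bar>Re (wl d ! 0) + Re (wl d ! 1) + Re (wl d ! 2) + Re (wl d ! 3) - (- 0.897127944834)\<bar> \<le> 0.000284399111665" by (rule mr_add[OF n266 n136]) simp
  have n268: "\<bar>Re (wl d ! 0) + Re (wl d ! 1) + Re (wl d ! 2) + Re (wl d ! 3) + Re (wl d ! 5) - (- 1.523363918623)\<bar> \<le> 0.000314498555426" by (rule mr_add[OF n267 n152]) simp
  have n269: "\<bar>Re (wl d ! 0) + Re (wl d ! 1) + Re (wl d ! 2) + Re (wl d ! 3) + Re (wl d ! 5) + Re (wl d ! 7) - (- 0.897127944835)\<bar> \<le> 0.000330620349828" by (rule mr_add[OF n268 n166]) simp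
  have n270: "\<bar>Re (wl d ! 0) + Re (wl d ! 1) + Re (wl d ! 2) + Re (wl d ! 3) + Re (wl d ! 5) + Re (wl d ! 7) + Re (wl d ! 11) - 0.064651760815\<bar> \<le> 0.000332877628459" by (rule mr_add[OF n269 n184]) simp
  have n271: "\<bar>Re (wl d ! 0) + Re (wl d ! 1) + Re (wl d ! 2) + Re (wl d ! 3) + Re (wl d ! 5) + Re (wl d ! 7) + Re (wl d ! 11) + Re (wl d ! 13) - 1.064651760815\<bar> \<le> 0.000332877628459" by (rule mr_add[OF n270 n188]) simp
  have n272: "\<bar>Yr 9 - 1.064651760815\<bar> \<le> 0.000332877628459" by (rule mr_eq[OF _ n271]) (simp add: Yr_def lessThan_nat_numeral G14l_def algebra_simps)
  have n273: "\<bar>Re (wl d ! 0) + Re (wl d ! 1) - 0.028619129581\<bar> \<le> 0.000172544477493" by (rule mr_add[OF n102 n114]) simp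
  have n274: "\<bar>Re (wl d ! 0) + Re (wl d ! 1) + Re (wl d ! 2) - 0.943311294799\<bar> \<le> 0.0002348054416" by (rule mr_add[OF n273 n126]) simp
  have n275: "\<bar>Re (wl d ! 0) + Re (wl d ! 1) + Re (wl d ! 2) + Re (wl d ! 3) - (- 0.897127944834)\<bar> \<le> 0.000284399111665" by (rule mr_add[OF n274 n136]) simp
  have n276: "\<bar>Re (wl d ! 0) + Re (wl d ! 1) + Re (wl d ! 2) + Re (wl d ! 3) + Re (wl d ! 4) - (- 0.156681186797)\<bar> \<le> 0.000323624789723" by (rule mr_add[OF n275 n144]) simp
  have n277: "\<bar>Re (wl d ! 0) + Re (wl d ! 1) + Re (wl d ! 2) + Re (wl d ! 3) + Re (wl d ! 4) + Re (wl d ! 6) - 0.343318813204\<bar> \<le> 0.000345787617115" by (rule mr_add[OF n276 n160]) simp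
  have n278: "\<bar>Re (wl d ! 0) + Re (wl d ! 1) + Re (wl d ! 2) + Re (wl d ! 3) + Re (wl d ! 4) + Re (wl d ! 6) + Re (wl d ! 8) - (- 0.397127944832)\<bar> \<le> 0.000356729380915" by (rule mr_add[OF n277 n172]) simp
  have n279: "\<bar>Re (wl d ! 0) + Re (wl d ! 1) + Re (wl d ! 2) + Re (wl d ! 3) + Re (wl d ! 4) + Re (wl d ! 6) + Re (wl d ! 8) + Re (wl d ! 12) - (- 1.387526780062)\<bar> \<le> 0.000357729380957" by (rule mr_add[OF n278 n186]) simp
  have n280: "\<bar>Yr 10 - (- 1.387526780062)\<bar> \<le> 0.000357729380957" by (rule mr_eq[OF _ n279]) (simp add: Yr_def lessThan_nat_numeral G14l_def algebra_simps)
  have n281: "\<bar>Re (wl d ! 0) + Re (wl d ! 1) - 0.028619129581\<bar> \<le> 0.000172544477493" by (rule mr_add[OF n102 n114]) simp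
  have n282: "\<bar>Re (wl d ! 0) + Re (wl d ! 1) + Re (wl d ! 2) - 0.943311294799\<bar> \<le> 0.0002348054416" by (rule mr_add[OF n281 n126]) simp
  have n283: "\<bar>Re (wl d ! 0) + Re (wl d ! 1) + Re (wl d ! 2) + Re (wl d ! 3) - (- 0.897127944834)\<bar> \<le> 0.000284399111665" by (rule mr_add[OF n282 n136]) simp
  have n284: "\<bar>Re (wl d ! 0) + Re (wl d ! 1) + Re (wl d ! 2) + Re (wl d ! 3) + Re (wl d ! 4) - (- 0.156681186797)\<bar> \<le> 0.000323624789723" by (rule mr_add[OF n283 n144]) simp
  have n285: "\<bar>Re (wl d ! 0) + Re (wl d ! 1) + Re (wl d ! 2) + Re (wl d ! 3) + Re (wl d ! 4) + Re (wl d ! 5) - (- 0.782917160586)\<bar> \<le> 0.000353724233484" by (rule mr_add[OF n284 n152]) simp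
  have n286: "\<bar>Re (wl d ! 0) + Re (wl d ! 1) + Re (wl d ! 2) + Re (wl d ! 3) + Re (wl d ! 4) + Re (wl d ! 5) + Re (wl d ! 7) - (- 0.156681186798)\<bar> \<le> 0.000369846027886" by (rule mr_add[OF n285 n166]) simp
  have n287: "\<bar>Re (wl d ! 0) + Re (wl d ! 1) + Re (wl d ! 2) + Re (wl d ! 3) + Re (wl d ! 4) + Re (wl d ! 5) + Re (wl d ! 7) + Re (wl d ! 9) - 0.683758052833\<bar> \<le> 0.000376434811753" by (rule mr_add[OF n286 n178]) simp
  have n288: "\<bar>Re (wl d ! 0) + Re (wl d ! 1) + Re (wl d ! 2) + Re (wl d ! 3) + Re (wl d ! 4) + Re (wl d ! 5) + Re (wl d ! 7) + Re (wl d ! 9) + Re (wl d ! 13) - 1.683758052833\<bar> \<le> 0.000376434811753" by (rule mr_add[OF n287 n188]) simp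
  have n289: "\<bar>Yr 11 - 1.683758052833\<bar> \<le> 0.000376434811753" by (rule mr_eq[OF _ n288]) (simp add: Yr_def lessThan_nat_numeral G14l_def algebra_simps)
  have n290: "\<bar>2 * Re (wl d ! 0) - 1.98079767046\<bar> \<le> 0.000189988057348" by (rule mr_cmul[OF n102]) simp
  have n291: "\<bar>2 * Re (wl d ! 0) + Re (wl d ! 1) - 1.019017964811\<bar> \<le> 0.000267538506167" by (rule mr_add[OF n290 n114]) simp
  have n292: "\<bar>2 * Re (wl d ! 0) + Re (wl d ! 1) + Re (wl d ! 2) - 1.933710130029\<bar> \<le> 0.000329799470274" by (rule mr_add[OF n291 n126]) simp
  have n293: "\<bar>2 * Re (wl d ! 0) + Re (wl d ! 1) + Re (wl d ! 2) + Re (wl d ! 3) - 0.093270890396\<bar> \<le> 0.000379393140339" by (rule mr_add[OF n292 n136]) simp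
  have n294: "\<bar>2 * Re (wl d ! 0) + Re (wl d ! 1) + Re (wl d ! 2) + Re (wl d ! 3) + Re (wl d ! 4) - 0.833717648433\<bar> \<le> 0.000418618818397" by (rule mr_add[OF n293 n144]) simp
  have n295: "\<bar>2 * Re (wl d ! 0) + Re (wl d ! 1) + Re (wl d ! 2) + Re (wl d ! 3) + Re (wl d ! 4) + Re (wl d ! 5) - 0.207481674644\<bar> \<le> 0.000448718262158" by (rule mr_add[OF n294 n152]) simp
  have n296: "\<bar>2 * Re (wl d ! 0) + Re (wl d ! 1) + Re (wl d ! 2) + Re (wl d ! 3) + Re (wl d ! 4) + Re (wl d ! 5) + Re (wl d ! 6) - 0.707481674645\<bar> \<le> 0.00047088108955" by (rule mr_add[OF n295 n160]) simp
  have n297: "\<bar>2 * Re (wl d ! 0) + Re (wl d ! 1) + Re (wl d ! 2) + Re (wl d ! 3) + Re (wl d ! 4) + Re (wl d ! 5) + Re (wl d ! 6) + Re (wl d ! 8) - (- 0.032965083391)\<bar> \<le> 0.00048182285335" by (rule mr_add[OF n296 n172]) simp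
  have n298: "\<bar>2 * Re (wl d ! 0) + Re (wl d ! 1) + Re (wl d ! 2) + Re (wl d ! 3) + Re (wl d ! 4) + Re (wl d ! 5) + Re (wl d ! 6) + Re (wl d ! 8) + Re (wl d ! 10) - (- 1.947657248609)\<bar> \<le> 0.000485606113812" by (rule mr_add[OF n297 n182]) simp
  have n299: "\<bar>Yr 12 - (- 1.947657248609)\<bar> \<le> 0.000485606113812" by (rule mr_eq[OF _ n298]) (simp add: Yr_def lessThan_nat_numeral G14l_def algebra_simps)
  have n300: "\<bar>2 * Re (wl d ! 0) - 1.98079767046\<bar> \<le> 0.000189988057348" by (rule mr_cmul[OF n102]) simp
  have n301: "\<bar>2 * Re (wl d ! 1) - (- 1.923559411298)\<bar> \<le> 0.000155100897638" by (rule mr_cmul[OF n114]) simp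
  have n302: "\<bar>2 * Re (wl d ! 0) + 2 * Re (wl d ! 1) - 0.057238259162\<bar> \<le> 0.000345088954986" by (rule mr_add[OF n300 n301]) simp
  have n303: "\<bar>2 * Re (wl d ! 0) + 2 * Re (wl d ! 1) + Re (wl d ! 2) - 0.97193042438\<bar> \<le> 0.000407349919093" by (rule mr_add[OF n302 n126]) simp
  have n304: "\<bar>2 * Re (wl d ! 0) + 2 * Re (wl d ! 1) + Re (wl d ! 2) + Re (wl d ! 3) - (- 0.868508815253)\<bar> \<le> 0.000456943589158" by (rule mr_add[OF n303 n136]) simp
  have n305: "\<bar>2 * Re (wl d ! 0) + 2 * Re (wl d ! 1) + Re (wl d ! 2) + Re (wl d ! 3) + Re (wl d ! 4) - (- 0.128062057216)\<bar> \<le> 0.000496169267216" by (rule mr_add[OF n304 n144]) simp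
  have n306: "\<bar>2 * Re (wl d ! 0) + 2 * Re (wl d ! 1) + Re (wl d ! 2) + Re (wl d ! 3) + Re (wl d ! 4) + Re (wl d ! 5) - (- 0.754298031005)\<bar> \<le> 0.000526268710977" by (rule mr_add[OF n305 n152]) simp
  have n307: "\<bar>2 * Re (wl d ! 0) + 2 * Re (wl d ! 1) + Re (wl d ! 2) + Re (wl d ! 3) + Re (wl d ! 4) + Re (wl d ! 5) + Re (wl d ! 6) - (- 0.254298031004)\<bar> \<le> 0.000548431538369" by (rule mr_add[OF n306 n160]) simp
  have n308: "\<bar>2 * Re (wl d ! 0) + 2 * Re (wl d ! 1) + Re (wl d ! 2) + Re (wl d ! 3) + Re (wl d ! 4) + Re (wl d ! 5) + Re (wl d ! 6) + Re (wl d ! 7) - 0.371937942784\<bar> \<le> 0.000564553332771" by (rule mr_add[OF n307 n166]) simp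
  have n309: "\<bar>2 * Re (wl d ! 0) + 2 * Re (wl d ! 1) + Re (wl d ! 2) + Re (wl d ! 3) + Re (wl d ! 4) + Re (wl d ! 5) + Re (wl d ! 6) + Re (wl d ! 7) + Re (wl d ! 9) - 1.212377182415\<bar> \<le> 0.000571142116638" by (rule mr_add[OF n308 n178]) simp
  have n310: "\<bar>2 * Re (wl d ! 0) + 2 * Re (wl d ! 1) + Re (wl d ! 2) + Re (wl d ! 3) + Re (wl d ! 4) + Re (wl d ! 5) + Re (wl d ! 6) + Re (wl d ! 7) + Re (wl d ! 9) + Re (wl d ! 11) - 2.174156888065\<bar> \<le> 0.000573399395269" by (rule mr_add[OF n309 n184]) simp
  have n311: "\<bar>Yr 13 - 2.174156888065\<bar> \<le> 0.000573399395269" by (rule mr_eq[OF _ n310]) (simp add: Yr_def lessThan_nat_numeral G14l_def algebra_simps)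
  have n312: "\<bar>2 * Im (wl d ! 12) - (- 0.276478911854)\<bar> \<le> 0.000002000000121" by (rule mr_cmul[OF n187]) simp
  have n313: "\<bar>2 * Im (wl d ! 13) - 0\<bar> \<le> 0" by (rule mr_cmul[OF n189]) simp
  have n314: "\<bar>Im (wl d ! 2) + Im (wl d ! 4) - (- 1.178905707155)\<bar> \<le> 0.000101486640827" by (rule mr_add[OF n131 n148]) simp
  have n315: "\<bar>Im (wl d ! 2) + Im (wl d ! 4) + Im (wl d ! 6) - (- 2.12680119252)\<bar> \<le> 0.000123649468539" by (rule mr_add[OF n314 n163]) simp
  have n316: "\<bar>Im (wl d ! 2) + Im (wl d ! 4) + Im (wl d ! 6) + Im (wl d ! 7) - (- 1.257126335858)\<bar> \<le> 0.000139771263284" by (rule mr_add[OF n315 n169]) simp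
  have n317: "\<bar>Im (wl d ! 2) + Im (wl d ! 4) + Im (wl d ! 6) + Im (wl d ! 7) + Im (wl d ! 8) - (- 2.031880780626)\<bar> \<le> 0.000150713027465" by (rule mr_add[OF n316 n175]) simp
  have n318: "\<bar>Im (wl d ! 2) + Im (wl d ! 4) + Im (wl d ! 6) + Im (wl d ! 7) + Im (wl d ! 8) + Im (wl d ! 9) - (- 1.366923837912)\<bar> \<le> 0.000157301811697" by (rule mr_add[OF n317 n180]) simp
  have n319: "\<bar>Im (wl d ! 2) + Im (wl d ! 4) + Im (wl d ! 6) + Im (wl d ! 7) + Im (wl d ! 8) + Im (wl d ! 9) + Im (wl d ! 10) - (- 1.771075100301)\<bar> \<le> 0.000161085072158" by (rule mr_add[OF n318 n183]) simp
  have n320: "\<bar>Im (wl d ! 2) + Im (wl d ! 4) + Im (wl d ! 6) + Im (wl d ! 7) + Im (wl d ! 8) + Im (wl d ! 9) + Im (wl d ! 10) + Im (wl d ! 11) - (- 1.497250708035)\<bar> \<le> 0.00016334235099" by (rule mr_add[OF n319 n185]) simp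
  have n321: "\<bar>Im (wl d ! 2) + Im (wl d ! 4) + Im (wl d ! 6) + Im (wl d ! 7) + Im (wl d ! 8) + Im (wl d ! 9) + Im (wl d ! 10) + Im (wl d ! 11) + 2 * Im (wl d ! 12) - (- 1.773729619889)\<bar> \<le> 0.000165342351111" by (rule mr_add[OF n320 n312]) simp
  have n322: "\<bar>Im (wl d ! 2) + Im (wl d ! 4) + Im (wl d ! 6) + Im (wl d ! 7) + Im (wl d ! 8) + Im (wl d ! 9) + Im (wl d ! 10) + Im (wl d ! 11) + 2 * Im (wl d ! 12) + 2 * Im (wl d ! 13) - (- 1.773729619889)\<bar> \<le> 0.000165342351111" by (rule mr_add[OF n321 n313]) simp
  have n323: "\<bar>Yi 0 - (- 1.773729619889)\<bar> \<le> 0.000165342351111" by (rule mr_eq[OF _ n322]) (simp add: Yi_def lessThan_nat_numeral G14l_def algebra_simps)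
  have n324: "\<bar>2 * Im (wl d ! 13) - 0\<bar> \<le> 0" by (rule mr_cmul[OF n189]) simp
  have n325: "\<bar>Im (wl d ! 3) + Im (wl d ! 5) - 1.534631799374\<bar> \<le> 0.000079693113246" by (rule mr_add[OF n140 n156]) simp
  have n326: "\<bar>Im (wl d ! 3) + Im (wl d ! 5) + Im (wl d ! 7) - 2.404306656036\<bar> \<le> 0.000095814907991" by (rule mr_add[OF n325 n169]) simp
  have n327: "\<bar>Im (wl d ! 3) + Im (wl d ! 5) + Im (wl d ! 7) + Im (wl d ! 8) - 1.629552211268\<bar> \<le> 0.000106756672172" by (rule mr_add[OF n326 n175]) simp
  have n328: "\<bar>Im (wl d ! 3) + Im (wl d ! 5) + Im (wl d ! 7) + Im (wl d ! 8) + Im (wl d ! 9) - 2.294509153982\<bar> \<le> 0.000113345456404" by (rule mr_add[OF n327 n180]) simp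
  have n329: "\<bar>Im (wl d ! 3) + Im (wl d ! 5) + Im (wl d ! 7) + Im (wl d ! 8) + Im (wl d ! 9) + Im (wl d ! 10) - 1.890357891593\<bar> \<le> 0.000117128716865" by (rule mr_add[OF n328 n183]) simp
  have n330: "\<bar>Im (wl d ! 3) + Im (wl d ! 5) + Im (wl d ! 7) + Im (wl d ! 8) + Im (wl d ! 9) + Im (wl d ! 10) + Im (wl d ! 11) - 2.164182283859\<bar> \<le> 0.000119385995697" by (rule mr_add[OF n329 n185]) simp
  have n331: "\<bar>Im (wl d ! 3) + Im (wl d ! 5) + Im (wl d ! 7) + Im (wl d ! 8) + Im (wl d ! 9) + Im (wl d ! 10) + Im (wl d ! 11) + Im (wl d ! 12) - 2.025942827932\<bar> \<le> 0.000120385995758" by (rule mr_add[OF n330 n187]) simp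
  have n332: "\<bar>Im (wl d ! 3) + Im (wl d ! 5) + Im (wl d ! 7) + Im (wl d ! 8) + Im (wl d ! 9) + Im (wl d ! 10) + Im (wl d ! 11) + Im (wl d ! 12) + 2 * Im (wl d ! 13) - 2.025942827932\<bar> \<le> 0.000120385995758" by (rule mr_add[OF n331 n324]) simp
  have n333: "\<bar>Yi 1 - 2.025942827932\<bar> \<le> 0.000120385995758" by (rule mr_eq[OF _ n332]) (simp add: Yi_def lessThan_nat_numeral G14l_def algebra_simps)
  have n334: "\<bar>Im (wl d ! 0) + Im (wl d ! 4) - (- 0.912993900695)\<bar> \<le> 0.000134219705174" by (rule mr_add[OF n108 n148]) simp
  have n335: "\<bar>Im (wl d ! 0) + Im (wl d ! 4) + Im (wl d ! 6) - (- 1.86088938606)\<bar> \<le> 0.000156382532886" by (rule mr_add[OF n334 n163]) simp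
  have n336: "\<bar>Im (wl d ! 0) + Im (wl d ! 4) + Im (wl d ! 6) + Im (wl d ! 8) - (- 2.635643830828)\<bar> \<le> 0.000167324297067" by (rule mr_add[OF n335 n175]) simp
  have n337: "\<bar>Im (wl d ! 0) + Im (wl d ! 4) + Im (wl d ! 6) + Im (wl d ! 8) + Im (wl d ! 9) - (- 1.970686888114)\<bar> \<le> 0.000173913081299" by (rule mr_add[OF n336 n180]) simp
  have n338: "\<bar>Im (wl d ! 0) + Im (wl d ! 4) + Im (wl d ! 6) + Im (wl d ! 8) + Im (wl d ! 9) + Im (wl d ! 10) - (- 2.374838150503)\<bar> \<le> 0.00017769634176" by (rule mr_add[OF n337 n183]) simp
  have n339: "\<bar>Im (wl d ! 0) + Im (wl d ! 4) + Im (wl d ! 6) + Im (wl d ! 8) + Im (wl d ! 9) + Im (wl d ! 10) + Im (wl d ! 11) - (- 2.101013758237)\<bar> \<le> 0.000179953620592" by (rule mr_add[OF n338 n185]) simp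
  have n340: "\<bar>Im (wl d ! 0) + Im (wl d ! 4) + Im (wl d ! 6) + Im (wl d ! 8) + Im (wl d ! 9) + Im (wl d ! 10) + Im (wl d ! 11) + Im (wl d ! 12) - (- 2.239253214164)\<bar> \<le> 0.000180953620653" by (rule mr_add[OF n339 n187]) simp
  have n341: "\<bar>Im (wl d ! 0) + Im (wl d ! 4) + Im (wl d ! 6) + Im (wl d ! 8) + Im (wl d ! 9) + Im (wl d ! 10) + Im (wl d ! 11) + Im (wl d ! 12) + Im (wl d ! 13) - (- 2.239253214164)\<bar> \<le> 0.000180953620653" by (rule mr_add[OF n340 n189]) simp
  have n342: "\<bar>Yi 2 - (- 2.239253214164)\<bar> \<le> 0.000180953620653" by (rule mr_eq[OF _ n341]) (simp add: Yi_def lessThan_nat_numeral G14l_def algebra_simps)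
  have n343: "\<bar>Im (wl d ! 1) + Im (wl d ! 5) - 1.143499248927\<bar> \<le> 0.000107649891434" by (rule mr_add[OF n120 n156]) simp
  have n344: "\<bar>Im (wl d ! 1) + Im (wl d ! 5) + Im (wl d ! 7) - 2.013174105589\<bar> \<le> 0.000123771686179" by (rule mr_add[OF n343 n169]) simp
  have n345: "\<bar>Im (wl d ! 1) + Im (wl d ! 5) + Im (wl d ! 7) + Im (wl d ! 9) - 2.678131048303\<bar> \<le> 0.000130360470411" by (rule mr_add[OF n344 n180]) simp
  have n346: "\<bar>Im (wl d ! 1) + Im (wl d ! 5) + Im (wl d ! 7) + Im (wl d ! 9) + Im (wl d ! 10) - 2.273979785914\<bar> \<le> 0.000134143730872" by (rule mr_add[OF n345 n183]) simp
  have n347: "\<bar>Im (wl d ! 1) + Im (wl d ! 5) + Im (wl d ! 7) + Im (wl d ! 9) + Im (wl d ! 10) + Im (wl d ! 11) - 2.54780417818\<bar> \<le> 0.000136401009704" by (rule mr_add[OF n346 n185]) simp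
  have n348: "\<bar>Im (wl d ! 1) + Im (wl d ! 5) + Im (wl d ! 7) + Im (wl d ! 9) + Im (wl d ! 10) + Im (wl d ! 11) + Im (wl d ! 12) - 2.409564722253\<bar> \<le> 0.000137401009765" by (rule mr_add[OF n347 n187]) simp
  have n349: "\<bar>Im (wl d ! 1) + Im (wl d ! 5) + Im (wl d ! 7) + Im (wl d ! 9) + Im (wl d ! 10) + Im (wl d ! 11) + Im (wl d ! 12) + Im (wl d ! 13) - 2.409564722253\<bar> \<le> 0.000137401009765" by (rule mr_add[OF n348 n189]) simp
  have n350: "\<bar>Yi 3 - 2.409564722253\<bar> \<le> 0.000137401009765" by (rule mr_eq[OF _ n349]) (simp add: Yi_def lessThan_nat_numeral G14l_def algebra_simps)
  have n351: "\<bar>Im (wl d ! 0) + Im (wl d ! 2) - (- 0.542390718314)\<bar> \<le> 0.000157254989641" by (rule mr_add[OF n108 n131]) simp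
  have n352: "\<bar>Im (wl d ! 0) + Im (wl d ! 2) + Im (wl d ! 6) - (- 1.490286203679)\<bar> \<le> 0.000179417817353" by (rule mr_add[OF n351 n163]) simp
  have n353: "\<bar>Im (wl d ! 0) + Im (wl d ! 2) + Im (wl d ! 6) + Im (wl d ! 8) - (- 2.265040648447)\<bar> \<le> 0.000190359581534" by (rule mr_add[OF n352 n175]) simp
  have n354: "\<bar>Im (wl d ! 0) + Im (wl d ! 2) + Im (wl d ! 6) + Im (wl d ! 8) + Im (wl d ! 10) - (- 2.669191910836)\<bar> \<le> 0.000194142841995" by (rule mr_add[OF n353 n183]) simp
  have n355: "\<bar>Im (wl d ! 0) + Im (wl d ! 2) + Im (wl d ! 6) + Im (wl d ! 8) + Im (wl d ! 10) + Im (wl d ! 11) - (- 2.39536751857)\<bar> \<le> 0.000196400120827" by (rule mr_add[OF n354 n185]) simp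
  have n356: "\<bar>Im (wl d ! 0) + Im (wl d ! 2) + Im (wl d ! 6) + Im (wl d ! 8) + Im (wl d ! 10) + Im (wl d ! 11) + Im (wl d ! 12) - (- 2.533606974497)\<bar> \<le> 0.000197400120888" by (rule mr_add[OF n355 n187]) simp
  have n357: "\<bar>Im (wl d ! 0) + Im (wl d ! 2) + Im (wl d ! 6) + Im (wl d ! 8) + Im (wl d ! 10) + Im (wl d ! 11) + Im (wl d ! 12) + Im (wl d ! 13) - (- 2.533606974497)\<bar> \<le> 0.000197400120888" by (rule mr_add[OF n356 n189]) simp
  have n358: "\<bar>Yi 4 - (- 2.533606974497)\<bar> \<le> 0.000197400120888" by (rule mr_eq[OF _ n357]) (simp add: Yi_def lessThan_nat_numeral G14l_def algebra_simps)
  have n359: "\<bar>Im (wl d ! 1) + Im (wl d ! 3) - 0.938781334979\<bar> \<le> 0.0001271441165" by (rule mr_add[OF n120 n140]) simp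
  have n360: "\<bar>Im (wl d ! 1) + Im (wl d ! 3) + Im (wl d ! 7) - 1.808456191641\<bar> \<le> 0.000143265911245" by (rule mr_add[OF n359 n169]) simp
  have n361: "\<bar>Im (wl d ! 1) + Im (wl d ! 3) + Im (wl d ! 7) + Im (wl d ! 9) - 2.473413134355\<bar> \<le> 0.000149854695477" by (rule mr_add[OF n360 n180]) simp
  have n362: "\<bar>Im (wl d ! 1) + Im (wl d ! 3) + Im (wl d ! 7) + Im (wl d ! 9) + Im (wl d ! 11) - 2.747237526621\<bar> \<le> 0.000152111974309" by (rule mr_add[OF n361 n185]) simp
  have n363: "\<bar>Im (wl d ! 1) + Im (wl d ! 3) + Im (wl d ! 7) + Im (wl d ! 9) + Im (wl d ! 11) + Im (wl d ! 12) - 2.608998070694\<bar> \<le> 0.00015311197437" by (rule mr_add[OF n362 n187]) simp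
  have n364: "\<bar>Im (wl d ! 1) + Im (wl d ! 3) + Im (wl d ! 7) + Im (wl d ! 9) + Im (wl d ! 11) + Im (wl d ! 12) + Im (wl d ! 13) - 2.608998070694\<bar> \<le> 0.00015311197437" by (rule mr_add[OF n363 n189]) simp
  have n365: "\<bar>Yi 5 - 2.608998070694\<bar> \<le> 0.00015311197437" by (rule mr_eq[OF _ n364]) (simp add: Yi_def lessThan_nat_numeral G14l_def algebra_simps)
  have n366: "\<bar>Im (wl d ! 0) + Im (wl d ! 2) - (- 0.542390718314)\<bar> \<le> 0.000157254989641" by (rule mr_add[OF n108 n131]) simp
  have n367: "\<bar>Im (wl d ! 0) + Im (wl d ! 2) + Im (wl d ! 4) - (- 1.317145163082)\<bar> \<le> 0.000196480667821" by (rule mr_add[OF n366 n148]) simp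
  have n368: "\<bar>Im (wl d ! 0) + Im (wl d ! 2) + Im (wl d ! 4) + Im (wl d ! 8) - (- 2.09189960785)\<bar> \<le> 0.000207422432002" by (rule mr_add[OF n367 n175]) simp
  have n369: "\<bar>Im (wl d ! 0) + Im (wl d ! 2) + Im (wl d ! 4) + Im (wl d ! 8) + Im (wl d ! 10) - (- 2.496050870239)\<bar> \<le> 0.000211205692463" by (rule mr_add[OF n368 n183]) simp
  have n370: "\<bar>Im (wl d ! 0) + Im (wl d ! 2) + Im (wl d ! 4) + Im (wl d ! 8) + Im (wl d ! 10) + Im (wl d ! 12) - (- 2.634290326166)\<bar> \<le> 0.000212205692524" by (rule mr_add[OF n369 n187]) simp
  have n371: "\<bar>Im (wl d ! 0) + Im (wl d ! 2) + Im (wl d ! 4) + Im (wl d ! 8) + Im (wl d ! 10) + Im (wl d ! 12) + Im (wl d ! 13) - (- 2.634290326166)\<bar> \<le> 0.000212205692524" by (rule mr_add[OF n370 n189]) simp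
  have n372: "\<bar>Yi 6 - (- 2.634290326166)\<bar> \<le> 0.000212205692524" by (rule mr_eq[OF _ n371]) (simp add: Yi_def lessThan_nat_numeral G14l_def algebra_simps)
  have n373: "\<bar>Im (wl d ! 0) + Im (wl d ! 1) - 0.135584936339\<bar> \<le> 0.000172544474338" by (rule mr_add[OF n108 n120]) simp
  have n374: "\<bar>Im (wl d ! 0) + Im (wl d ! 1) + Im (wl d ! 3) - 0.800541879052\<bar> \<le> 0.000222138143494" by (rule mr_add[OF n373 n140]) simp
  have n375: "\<bar>Im (wl d ! 0) + Im (wl d ! 1) + Im (wl d ! 3) + Im (wl d ! 5) - 1.670216735713\<bar> \<le> 0.000252237587584" by (rule mr_add[OF n374 n156]) simp
  have n376: "\<bar>Im (wl d ! 0) + Im (wl d ! 1) + Im (wl d ! 3) + Im (wl d ! 5) + Im (wl d ! 9) - 2.335173678427\<bar> \<le> 0.000258826371816" by (rule mr_add[OF n375 n180]) simp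
  have n377: "\<bar>Im (wl d ! 0) + Im (wl d ! 1) + Im (wl d ! 3) + Im (wl d ! 5) + Im (wl d ! 9) + Im (wl d ! 11) - 2.608998070693\<bar> \<le> 0.000261083650648" by (rule mr_add[OF n376 n185]) simp
  have n378: "\<bar>Im (wl d ! 0) + Im (wl d ! 1) + Im (wl d ! 3) + Im (wl d ! 5) + Im (wl d ! 9) + Im (wl d ! 11) + Im (wl d ! 13) - 2.608998070693\<bar> \<le> 0.000261083650648" by (rule mr_add[OF n377 n189]) simp
  have n379: "\<bar>Yi 7 - 2.608998070693\<bar> \<le> 0.000261083650648" by (rule mr_eq[OF _ n378]) (simp add: Yi_def lessThan_nat_numeral G14l_def algebra_simps)
  have n380: "\<bar>Im (wl d ! 0) + Im (wl d ! 1) - 0.135584936339\<bar> \<le> 0.000172544474338" by (rule mr_add[OF n108 n120]) simp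
  have n381: "\<bar>Im (wl d ! 0) + Im (wl d ! 1) + Im (wl d ! 2) - (- 0.268566326048)\<bar> \<le> 0.000234805436985" by (rule mr_add[OF n380 n131]) simp
  have n382: "\<bar>Im (wl d ! 0) + Im (wl d ! 1) + Im (wl d ! 2) + Im (wl d ! 4) - (- 1.043320770816)\<bar> \<le> 0.000274031115165" by (rule mr_add[OF n381 n148]) simp
  have n383: "\<bar>Im (wl d ! 0) + Im (wl d ! 1) + Im (wl d ! 2) + Im (wl d ! 4) + Im (wl d ! 6) - (- 1.991216256181)\<bar> \<le> 0.000296193942877" by (rule mr_add[OF n382 n163]) simp
  have n384: "\<bar>Im (wl d ! 0) + Im (wl d ! 1) + Im (wl d ! 2) + Im (wl d ! 4) + Im (wl d ! 6) + Im (wl d ! 10) - (- 2.39536751857)\<bar> \<le> 0.000299977203338" by (rule mr_add[OF n383 n183]) simp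
  have n385: "\<bar>Im (wl d ! 0) + Im (wl d ! 1) + Im (wl d ! 2) + Im (wl d ! 4) + Im (wl d ! 6) + Im (wl d ! 10) + Im (wl d ! 12) - (- 2.533606974497)\<bar> \<le> 0.000300977203399" by (rule mr_add[OF n384 n187]) simp
  have n386: "\<bar>Yi 8 - (- 2.533606974497)\<bar> \<le> 0.000300977203399" by (rule mr_eq[OF _ n385]) (simp add: Yi_def lessThan_nat_numeral G14l_def algebra_simps)
  have n387: "\<bar>Im (wl d ! 0) + Im (wl d ! 1) - 0.135584936339\<bar> \<le> 0.000172544474338" by (rule mr_add[OF n108 n120]) simp
  have n388: "\<bar>Im (wl d ! 0) + Im (wl d ! 1) + Im (wl d ! 2) - (- 0.268566326048)\<bar> \<le> 0.000234805436985" by (rule mr_add[OF n387 n131]) simp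
  have n389: "\<bar>Im (wl d ! 0) + Im (wl d ! 1) + Im (wl d ! 2) + Im (wl d ! 3) - 0.396390616665\<bar> \<le> 0.000284399106141" by (rule mr_add[OF n388 n140]) simp
  have n390: "\<bar>Im (wl d ! 0) + Im (wl d ! 1) + Im (wl d ! 2) + Im (wl d ! 3) + Im (wl d ! 5) - 1.266065473326\<bar> \<le> 0.000314498550231" by (rule mr_add[OF n389 n156]) simp
  have n391: "\<bar>Im (wl d ! 0) + Im (wl d ! 1) + Im (wl d ! 2) + Im (wl d ! 3) + Im (wl d ! 5) + Im (wl d ! 7) - 2.135740329988\<bar> \<le> 0.000330620344976" by (rule mr_add[OF n390 n169]) simp
  have n392: "\<bar>Im (wl d ! 0) + Im (wl d ! 1) + Im (wl d ! 2) + Im (wl d ! 3) + Im (wl d ! 5) + Im (wl d ! 7) + Im (wl d ! 11) - 2.409564722254\<bar> \<le> 0.000332877623808" by (rule mr_add[OF n391 n185]) simp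
  have n393: "\<bar>Im (wl d ! 0) + Im (wl d ! 1) + Im (wl d ! 2) + Im (wl d ! 3) + Im (wl d ! 5) + Im (wl d ! 7) + Im (wl d ! 11) + Im (wl d ! 13) - 2.409564722254\<bar> \<le> 0.000332877623808" by (rule mr_add[OF n392 n189]) simp
  have n394: "\<bar>Yi 9 - 2.409564722254\<bar> \<le> 0.000332877623808" by (rule mr_eq[OF _ n393]) (simp add: Yi_def lessThan_nat_numeral G14l_def algebra_simps)
  have n395: "\<bar>Im (wl d ! 0) + Im (wl d ! 1) - 0.135584936339\<bar> \<le> 0.000172544474338" by (rule mr_add[OF n108 n120]) simp
  have n396: "\<bar>Im (wl d ! 0) + Im (wl d ! 1) + Im (wl d ! 2) - (- 0.268566326048)\<bar> \<le> 0.000234805436985" by (rule mr_add[OF n395 n131]) simp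
  have n397: "\<bar>Im (wl d ! 0) + Im (wl d ! 1) + Im (wl d ! 2) + Im (wl d ! 3) - 0.396390616665\<bar> \<le> 0.000284399106141" by (rule mr_add[OF n396 n140]) simp
  have n398: "\<bar>Im (wl d ! 0) + Im (wl d ! 1) + Im (wl d ! 2) + Im (wl d ! 3) + Im (wl d ! 4) - (- 0.378363828103)\<bar> \<le> 0.000323624784321" by (rule mr_add[OF n397 n148]) simp
  have n399: "\<bar>Im (wl d ! 0) + Im (wl d ! 1) + Im (wl d ! 2) + Im (wl d ! 3) + Im (wl d ! 4) + Im (wl d ! 6) - (- 1.326259313468)\<bar> \<le> 0.000345787612033" by (rule mr_add[OF n398 n163]) simp
  have n400: "\<bar>Im (wl d ! 0) + Im (wl d ! 1) + Im (wl d ! 2) + Im (wl d ! 3) + Im (wl d ! 4) + Im (wl d ! 6) + Im (wl d ! 8) - (- 2.101013758236)\<bar> \<le> 0.000356729376214" by (rule mr_add[OF n399 n175]) simp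
  have n401: "\<bar>Im (wl d ! 0) + Im (wl d ! 1) + Im (wl d ! 2) + Im (wl d ! 3) + Im (wl d ! 4) + Im (wl d ! 6) + Im (wl d ! 8) + Im (wl d ! 12) - (- 2.239253214163)\<bar> \<le> 0.000357729376275" by (rule mr_add[OF n400 n187]) simp
  have n402: "\<bar>Yi 10 - (- 2.239253214163)\<bar> \<le> 0.000357729376275" by (rule mr_eq[OF _ n401]) (simp add: Yi_def lessThan_nat_numeral G14l_def algebra_simps)
  have n403: "\<bar>Im (wl d ! 0) + Im (wl d ! 1) - 0.135584936339\<bar> \<le> 0.000172544474338" by (rule mr_add[OF n108 n120]) simp
  have n404: "\<bar>Im (wl d ! 0) + Im (wl d ! 1) + Im (wl d ! 2) - (- 0.268566326048)\<bar> \<le> 0.000234805436985" by (rule mr_add[OF n403 n131]) simp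
  have n405: "\<bar>Im (wl d ! 0) + Im (wl d ! 1) + Im (wl d ! 2) + Im (wl d ! 3) - 0.396390616665\<bar> \<le> 0.000284399106141" by (rule mr_add[OF n404 n140]) simp
  have n406: "\<bar>Im (wl d ! 0) + Im (wl d ! 1) + Im (wl d ! 2) + Im (wl d ! 3) + Im (wl d ! 4) - (- 0.378363828103)\<bar> \<le> 0.000323624784321" by (rule mr_add[OF n405 n148]) simp
  have n407: "\<bar>Im (wl d ! 0) + Im (wl d ! 1) + Im (wl d ! 2) + Im (wl d ! 3) + Im (wl d ! 4) + Im (wl d ! 5) - 0.491311028558\<bar> \<le> 0.000353724228411" by (rule mr_add[OF n406 n156]) simp
  have n408: "\<bar>Im (wl d ! 0) + Im (wl d ! 1) + Im (wl d ! 2) + Im (wl d ! 3) + Im (wl d ! 4) + Im (wl d ! 5) + Im (wl d ! 7) - 1.36098588522\<bar> \<le> 0.000369846023156" by (rule mr_add[OF n407 n169]) simp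
  have n409: "\<bar>Im (wl d ! 0) + Im (wl d ! 1) + Im (wl d ! 2) + Im (wl d ! 3) + Im (wl d ! 4) + Im (wl d ! 5) + Im (wl d ! 7) + Im (wl d ! 9) - 2.025942827934\<bar> \<le> 0.000376434807388" by (rule mr_add[OF n408 n180]) simp
  have n410: "\<bar>Im (wl d ! 0) + Im (wl d ! 1) + Im (wl d ! 2) + Im (wl d ! 3) + Im (wl d ! 4) + Im (wl d ! 5) + Im (wl d ! 7) + Im (wl d ! 9) + Im (wl d ! 13) - 2.025942827934\<bar> \<le> 0.000376434807388" by (rule mr_add[OF n409 n189]) simp
  have n411: "\<bar>Yi 11 - 2.025942827934\<bar> \<le> 0.000376434807388" by (rule mr_eq[OF _ n410]) (simp add: Yi_def lessThan_nat_numeral G14l_def algebra_simps)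
  have n412: "\<bar>2 * Im (wl d ! 0) - (- 0.276478911854)\<bar> \<le> 0.000189988053988" by (rule mr_cmul[OF n108]) simp
  have n413: "\<bar>2 * Im (wl d ! 0) + Im (wl d ! 1) - (- 0.002654519588)\<bar> \<le> 0.000267538501332" by (rule mr_add[OF n412 n120]) simp
  have n414: "\<bar>2 * Im (wl d ! 0) + Im (wl d ! 1) + Im (wl d ! 2) - (- 0.406805781975)\<bar> \<le> 0.000329799463979" by (rule mr_add[OF n413 n131]) simp
  have n415: "\<bar>2 * Im (wl d ! 0) + Im (wl d ! 1) + Im (wl d ! 2) + Im (wl d ! 3) - 0.258151160738\<bar> \<le> 0.000379393133135" by (rule mr_add[OF n414 n140]) simp
  have n416: "\<bar>2 * Im (wl d ! 0) + Im (wl d ! 1) + Im (wl d ! 2) + Im (wl d ! 3) + Im (wl d ! 4) - (- 0.51660328403)\<bar> \<le> 0.000418618811315" by (rule mr_add[OF n415 n148]) simp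
  have n417: "\<bar>2 * Im (wl d ! 0) + Im (wl d ! 1) + Im (wl d ! 2) + Im (wl d ! 3) + Im (wl d ! 4) + Im (wl d ! 5) - 0.353071572631\<bar> \<le> 0.000448718255405" by (rule mr_add[OF n416 n156]) simp
  have n418: "\<bar>2 * Im (wl d ! 0) + Im (wl d ! 1) + Im (wl d ! 2) + Im (wl d ! 3) + Im (wl d ! 4) + Im (wl d ! 5) + Im (wl d ! 6) - (- 0.594823912734)\<bar> \<le> 0.000470881083117" by (rule mr_add[OF n417 n163]) simp
  have n419: "\<bar>2 * Im (wl d ! 0) + Im (wl d ! 1) + Im (wl d ! 2) + Im (wl d ! 3) + Im (wl d ! 4) + Im (wl d ! 5) + Im (wl d ! 6) + Im (wl d ! 8) - (- 1.369578357502)\<bar> \<le> 0.000481822847298" by (rule mr_add[OF n418 n175]) simp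
  have n420: "\<bar>2 * Im (wl d ! 0) + Im (wl d ! 1) + Im (wl d ! 2) + Im (wl d ! 3) + Im (wl d ! 4) + Im (wl d ! 5) + Im (wl d ! 6) + Im (wl d ! 8) + Im (wl d ! 10) - (- 1.773729619891)\<bar> \<le> 0.000485606107759" by (rule mr_add[OF n419 n183]) simp
  have n421: "\<bar>Yi 12 - (- 1.773729619891)\<bar> \<le> 0.000485606107759" by (rule mr_eq[OF _ n420]) (simp add: Yi_def lessThan_nat_numeral G14l_def algebra_simps)
  have n422: "\<bar>2 * Im (wl d ! 0) - (- 0.276478911854)\<bar> \<le> 0.000189988053988" by (rule mr_cmul[OF n108]) simp
  have n423: "\<bar>2 * Im (wl d ! 1) - 0.547648784532\<bar> \<le> 0.000155100894688" by (rule mr_cmul[OF n120]) simp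
  have n424: "\<bar>2 * Im (wl d ! 0) + 2 * Im (wl d ! 1) - 0.271169872678\<bar> \<le> 0.000345088948676" by (rule mr_add[OF n422 n423]) simp
  have n425: "\<bar>2 * Im (wl d ! 0) + 2 * Im (wl d ! 1) + Im (wl d ! 2) - (- 0.132981389709)\<bar> \<le> 0.000407349911323" by (rule mr_add[OF n424 n131]) simp
  have n426: "\<bar>2 * Im (wl d ! 0) + 2 * Im (wl d ! 1) + Im (wl d ! 2) + Im (wl d ! 3) - 0.531975553004\<bar> \<le> 0.000456943580479" by (rule mr_add[OF n425 n140]) simp
  have n427: "\<bar>2 * Im (wl d ! 0) + 2 * Im (wl d ! 1) + Im (wl d ! 2) + Im (wl d ! 3) + Im (wl d ! 4) - (- 0.242778891764)\<bar> \<le> 0.000496169258659" by (rule mr_add[OF n426 n148]) simp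
  have n428: "\<bar>2 * Im (wl d ! 0) + 2 * Im (wl d ! 1) + Im (wl d ! 2) + Im (wl d ! 3) + Im (wl d ! 4) + Im (wl d ! 5) - 0.626895964897\<bar> \<le> 0.000526268702749" by (rule mr_add[OF n427 n156]) simp
  have n429: "\<bar>2 * Im (wl d ! 0) + 2 * Im (wl d ! 1) + Im (wl d ! 2) + Im (wl d ! 3) + Im (wl d ! 4) + Im (wl d ! 5) + Im (wl d ! 6) - (- 0.320999520468)\<bar> \<le> 0.000548431530461" by (rule mr_add[OF n428 n163]) simp
  have n430: "\<bar>2 * Im (wl d ! 0) + 2 * Im (wl d ! 1) + Im (wl d ! 2) + Im (wl d ! 3) + Im (wl d ! 4) + Im (wl d ! 5) + Im (wl d ! 6) + Im (wl d ! 7) - 0.548675336194\<bar> \<le> 0.000564553325206" by (rule mr_add[OF n429 n169]) simp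
  have n431: "\<bar>2 * Im (wl d ! 0) + 2 * Im (wl d ! 1) + Im (wl d ! 2) + Im (wl d ! 3) + Im (wl d ! 4) + Im (wl d ! 5) + Im (wl d ! 6) + Im (wl d ! 7) + Im (wl d ! 9) - 1.213632278908\<bar> \<le> 0.000571142109438" by (rule mr_add[OF n430 n180]) simp
  have n432: "\<bar>2 * Im (wl d ! 0) + 2 * Im (wl d ! 1) + Im (wl d ! 2) + Im (wl d ! 3) + Im (wl d ! 4) + Im (wl d ! 5) + Im (wl d ! 6) + Im (wl d ! 7) + Im (wl d ! 9) + Im (wl d ! 11) - 1.487456671174\<bar> \<le> 0.00057339938827" by (rule mr_add[OF n431 n185]) simp
  have n433: "\<bar>Yi 13 - 1.487456671174\<bar> \<le> 0.00057339938827" by (rule mr_eq[OF _ n432]) (simp add: Yi_def lessThan_nat_numeral G14l_def algebra_simps)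
  have n434: "\<bar>Re (wl d ! 0) * Yr 0 - 1.928957470452\<bar> \<le> 0.000348786387107" by (rule mr_mul[OF n102 n201]) simp
  have n435: "\<bar>Im (wl d ! 0) * Yi 0 - 0.245199417615\<bar> \<le> 0.000191366262647" by (rule mr_mul[OF n108 n323]) simp
  have n436: "\<bar>(Re (wl d ! 0) * Yr 0 + Im (wl d ! 0) * Yi 0) - 2.174156888067\<bar> \<le> 0.000540152649754" by (rule mr_add[OF n434 n435]) simp
  have n437: "\<bar>Re (wl d ! 1) * Yr 1 - 1.619404324442\<bar> \<le> 0.00024637033585" by (rule mr_mul[OF n114 n211]) simp
  have n438: "\<bar>Im (wl d ! 1) * Yi 1 - 0.554752563624\<bar> \<le> 0.000190086730855" by (rule mr_mul[OF n120 n333]) simp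
  have n439: "\<bar>(Re (wl d ! 1) * Yr 1 + Im (wl d ! 1) * Yi 1) - 2.174156888066\<bar> \<le> 0.000436457066705" by (rule mr_add[OF n437 n438]) simp
  have n440: "\<bar>Re (wl d ! 2) * Yr 2 - 1.269159874756\<bar> \<le> 0.000251916881113" by (rule mr_mul[OF n126 n220]) simp
  have n441: "\<bar>Im (wl d ! 2) * Yi 2 - 0.904997013309\<bar> \<le> 0.000212561961764" by (rule mr_mul[OF n131 n342]) simp
  have n442: "\<bar>(Re (wl d ! 2) * Yr 2 + Im (wl d ! 2) * Yi 2) - 2.174156888065\<bar> \<le> 0.000464478842877" by (rule mr_add[OF n440 n441]) simp
  have n443: "\<bar>Re (wl d ! 3) * Yr 3 - 1.959426877152\<bar> \<le> 0.000305685012747" by (rule mr_mul[OF n136 n228]) simp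
  have n444: "\<bar>Im (wl d ! 3) * Yi 3 - 1.602256790978\<bar> \<le> 0.000210871725699" by (rule mr_mul[OF n140 n350]) simp
  have n445: "\<bar>(Re (wl d ! 3) * Yr 3 + Im (wl d ! 3) * Yi 3) - 3.56168366813\<bar> \<le> 0.000516556738446" by (rule mr_add[OF n443 n444]) simp
  have n446: "\<bar>Re (wl d ! 4) * Yr 4 - 0.534108642527\<bar> \<le> 0.000174466798521" by (rule mr_mul[OF n144 n236]) simp
  have n447: "\<bar>Im (wl d ! 4) * Yi 4 - 1.962923264787\<bar> \<le> 0.00025232681627" by (rule mr_mul[OF n148 n358]) simp
  have n448: "\<bar>(Re (wl d ! 4) * Yr 4 + Im (wl d ! 4) * Yi 4) - 2.497031907314\<bar> \<le> 0.000426793614791" by (rule mr_add[OF n446 n447]) simp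
  have n449: "\<bar>Re (wl d ! 5) * Yr 5 - 0.228051884154\<bar> \<le> 0.000106849935888" by (rule mr_mul[OF n152 n243]) simp
  have n450: "\<bar>Im (wl d ! 5) * Yi 5 - 2.26898002316\<bar> \<le> 0.000211691634879" by (rule mr_mul[OF n156 n365]) simp
  have n451: "\<bar>(Re (wl d ! 5) * Yr 5 + Im (wl d ! 5) * Yi 5) - 2.497031907314\<bar> \<le> 0.000318541570767" by (rule mr_add[OF n449 n450]) simp
  have n452: "\<bar>Re (wl d ! 6) * Yr 6 - 0.000000000001\<bar> \<le> 0.00010610755115" by (rule mr_mul[OF n160 n250]) simp
  have n453: "\<bar>Im (wl d ! 6) * Yi 6 - 2.497031907313\<bar> \<le> 0.000259536844078" by (rule mr_mul[OF n163 n372]) simp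
  have n454: "\<bar>(Re (wl d ! 6) * Yr 6 + Im (wl d ! 6) * Yi 6) - 2.497031907314\<bar> \<le> 0.000365644395228" by (rule mr_add[OF n452 n453]) simp
  have n455: "\<bar>Re (wl d ! 7) * Yr 7 - 0.228051884151\<bar> \<le> 0.00016937514441" by (rule mr_mul[OF n166 n257]) simp
  have n456: "\<bar>Im (wl d ! 7) * Yi 7 - 2.268980023161\<bar> \<le> 0.000269123827347" by (rule mr_mul[OF n169 n379]) simp
  have n457: "\<bar>(Re (wl d ! 7) * Yr 7 + Im (wl d ! 7) * Yi 7) - 2.497031907312\<bar> \<le> 0.000438498971757" by (rule mr_add[OF n455 n456]) simp
  have n458: "\<bar>Re (wl d ! 8) * Yr 8 - 0.534108642523\<bar> \<le> 0.000230753545649" by (rule mr_mul[OF n172 n264]) simp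
  have n459: "\<bar>Im (wl d ! 8) * Yi 8 - 1.962923264787\<bar> \<le> 0.000260908849616" by (rule mr_mul[OF n175 n386]) simp
  have n460: "\<bar>(Re (wl d ! 8) * Yr 8 + Im (wl d ! 8) * Yi 8) - 2.49703190731\<bar> \<le> 0.000491662395265" by (rule mr_add[OF n458 n459]) simp
  have n461: "\<bar>Re (wl d ! 9) * Yr 9 - 0.894775116331\<bar> \<le> 0.000286780374721" by (rule mr_mul[OF n178 n272]) simp
  have n462: "\<bar>Im (wl d ! 9) * Yi 9 - 1.602256790982\<bar> \<le> 0.000237227582804" by (rule mr_mul[OF n180 n394]) simp
  have n463: "\<bar>(Re (wl d ! 9) * Yr 9 + Im (wl d ! 9) * Yi 9) - 2.497031907313\<bar> \<le> 0.000524007957525" by (rule mr_add[OF n461 n462]) simp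
  have n464: "\<bar>Re (wl d ! 10) * Yr 10 - 2.656686654815\<bar> \<le> 0.000690192371707" by (rule mr_mul[OF n182 n280]) simp
  have n465: "\<bar>Im (wl d ! 10) * Yi 10 - 0.904997013313\<bar> \<le> 0.000153049810944" by (rule mr_mul[OF n183 n402]) simp
  have n466: "\<bar>(Re (wl d ! 10) * Yr 10 + Im (wl d ! 10) * Yi 10) - 3.561683668128\<bar> \<le> 0.000843242182651" by (rule mr_add[OF n464 n465]) simp
  have n467: "\<bar>Re (wl d ! 11) * Yr 11 - 1.61940432444\<bar> \<le> 0.000365848923696" by (rule mr_mul[OF n184 n289]) simp
  have n468: "\<bar>Im (wl d ! 11) * Yi 11 - 0.554752563625\<bar> \<le> 0.000107651000251" by (rule mr_mul[OF n185 n411]) simp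
  have n469: "\<bar>(Re (wl d ! 11) * Yr 11 + Im (wl d ! 11) * Yi 11) - 2.174156888065\<bar> \<le> 0.000473499923947" by (rule mr_add[OF n467 n468]) simp
  have n470: "\<bar>Re (wl d ! 12) * Yr 12 - 1.92895747045\<bar> \<le> 0.000482891872653" by (rule mr_mul[OF n186 n299]) simp
  have n471: "\<bar>Im (wl d ! 12) * Yi 12 - 0.245199417615\<bar> \<le> 0.000068904139587" by (rule mr_mul[OF n187 n421]) simp
  have n472: "\<bar>(Re (wl d ! 12) * Yr 12 + Im (wl d ! 12) * Yi 12) - 2.174156888065\<bar> \<le> 0.00055179601224" by (rule mr_add[OF n470 n471]) simp
  have n473: "\<bar>Re (wl d ! 13) * Yr 13 - 2.174156888065\<bar> \<le> 0.000573399395269" by (rule mr_mul[OF n188 n311]) simp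
  have n474: "\<bar>Im (wl d ! 13) * Yi 13 - 0\<bar> \<le> 0" by (rule mr_mul[OF n189 n433]) simp
  have n475: "\<bar>(Re (wl d ! 13) * Yr 13 + Im (wl d ! 13) * Yi 13) - 2.174156888065\<bar> \<le> 0.000573399395269" by (rule mr_add[OF n473 n474]) simp
  have n476: "\<bar>(Re (wl d ! 0) * Yr 0 + Im (wl d ! 0) * Yi 0) + (Re (wl d ! 1) * Yr 1 + Im (wl d ! 1) * Yi 1) - 4.348313776133\<bar> \<le> 0.000976609716459" by (rule mr_add[OF n436 n439]) simp
  have n477: "\<bar>(Re (wl d ! 0) * Yr 0 + Im (wl d ! 0) * Yi 0) + (Re (wl d ! 1) * Yr 1 + Im (wl d ! 1) * Yi 1) + (Re (wl d ! 2) * Yr 2 + Im (wl d ! 2) * Yi 2) - 6.522470664198\<bar> \<le> 0.001441088559336" by (rule mr_add[OF n476 n442]) simp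
  have n478: "\<bar>(Re (wl d ! 0) * Yr 0 + Im (wl d ! 0) * Yi 0) + (Re (wl d ! 1) * Yr 1 + Im (wl d ! 1) * Yi 1) + (Re (wl d ! 2) * Yr 2 + Im (wl d ! 2) * Yi 2) + (Re (wl d ! 3) * Yr 3 + Im (wl d ! 3) * Yi 3) - 10.084154332328\<bar> \<le> 0.001957645297782" by (rule mr_add[OF n477 n445]) simp
  have n479: "\<bar>(Re (wl d ! 0) * Yr 0 + Im (wl d ! 0) * Yi 0) + (Re (wl d ! 1) * Yr 1 + Im (wl d ! 1) * Yi 1) + (Re (wl d ! 2) * Yr 2 + Im (wl d ! 2) * Yi 2) + (Re (wl d ! 3) * Yr 3 + Im (wl d ! 3) * Yi 3) + (Re (wl d ! 4) * Yr 4 + Im (wl d ! 4) * Yi 4) - 12.581186239642\<bar> \<le> 0.002384438912573" by (rule mr_add[OF n478 n448]) simp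
  have n480: "\<bar>(Re (wl d ! 0) * Yr 0 + Im (wl d ! 0) * Yi 0) + (Re (wl d ! 1) * Yr 1 + Im (wl d ! 1) * Yi 1) + (Re (wl d ! 2) * Yr 2 + Im (wl d ! 2) * Yi 2) + (Re (wl d ! 3) * Yr 3 + Im (wl d ! 3) * Yi 3) + (Re (wl d ! 4) * Yr 4 + Im (wl d ! 4) * Yi 4) + (Re (wl d ! 5) * Yr 5 + Im (wl d ! 5) * Yi 5) - 15.078218146956\<bar> \<le> 0.00270298048334" by (rule mr_add[OF n479 n451]) simp
  have n481: "\<bar>(Re (wl d ! 0) * Yr 0 + Im (wl d ! 0) * Yi 0) + (Re (wl d ! 1) * Yr 1 + Im (wl d ! 1) * Yi 1) + (Re (wl d ! 2) * Yr 2 + Im (wl d ! 2) * Yi 2) + (Re (wl d ! 3) * Yr 3 + Im (wl d ! 3) * Yi 3) + (Re (wl d ! 4) * Yr 4 + Im (wl d ! 4) * Yi 4) + (Re (wl d ! 5) * Yr 5 + Im (wl d ! 5) * Yi 5) + (Re (wl d ! 6) * Yr 6 + Im (wl d ! 6) * Yi 6) - 17.57525005427\<bar> \<le> 0.003068624878568" by (rule mr_add[OF n480 n454]) simp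
  have n482: "\<bar>(Re (wl d ! 0) * Yr 0 + Im (wl d ! 0) * Yi 0) + (Re (wl d ! 1) * Yr 1 + Im (wl d ! 1) * Yi 1) + (Re (wl d ! 2) * Yr 2 + Im (wl d ! 2) * Yi 2) + (Re (wl d ! 3) * Yr 3 + Im (wl d ! 3) * Yi 3) + (Re (wl d ! 4) * Yr 4 + Im (wl d ! 4) * Yi 4) + (Re (wl d ! 5) * Yr 5 + Im (wl d ! 5) * Yi 5) + (Re (wl d ! 6) * Yr 6 + Im (wl d ! 6) * Yi 6) + (Re (wl d ! 7) * Yr 7 + Im (wl d ! 7) * Yi 7) - 20.072281961582\<bar> \<le> 0.003507123850325" by (rule mr_add[OF n481 n457]) simp
  have n483: "\<bar>(Re (wl d ! 0) * Yr 0 + Im (wl d ! 0) * Yi 0) + (Re (wl d ! 1) * Yr 1 + Im (wl d ! 1) * Yi 1) + (Re (wl d ! 2) * Yr 2 + Im (wl d ! 2) * Yi 2) + (Re (wl d ! 3) * Yr 3 + Im (wl d ! 3) * Yi 3) + (Re (wl d ! 4) * Yr 4 + Im (wl d ! 4) * Yi 4) + (Re (wl d ! 5) * Yr 5 + Im (wl d ! 5) * Yi 5) + (Re (wl d ! 6) * Yr 6 + Im (wl d ! 6) * Yi 6) + (Re (wl d ! 7) * Yr 7 + Im (wl d ! 7) * Yi 7) + (Re (wl d ! 8) * Yr 8 + Im (wl d ! 8) * Yi 8) - 22.569313868892\<bar> \<le> 0.00399878624559" by (rule mr_add[OF n482 n460]) simp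
  have n484: "\<bar>(Re (wl d ! 0) * Yr 0 + Im (wl d ! 0) * Yi 0) + (Re (wl d ! 1) * Yr 1 + Im (wl d ! 1) * Yi 1) + (Re (wl d ! 2) * Yr 2 + Im (wl d ! 2) * Yi 2) + (Re (wl d ! 3) * Yr 3 + Im (wl d ! 3) * Yi 3) + (Re (wl d ! 4) * Yr 4 + Im (wl d ! 4) * Yi 4) + (Re (wl d ! 5) * Yr 5 + Im (wl d ! 5) * Yi 5) + (Re (wl d ! 6) * Yr 6 + Im (wl d ! 6) * Yi 6) + (Re (wl d ! 7) * Yr 7 + Im (wl d ! 7) * Yi 7) + (Re (wl d ! 8) * Yr 8 + Im (wl d ! 8) * Yi 8) + (Re (wl d ! 9) * Yr 9 + Im (wl d ! 9) * Yi 9) - 25.066345776205\<bar> \<le> 0.004522794203115" by (rule mr_add[OF n483 n463]) simp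
  have n485: "\<bar>(Re (wl d ! 0) * Yr 0 + Im (wl d ! 0) * Yi 0) + (Re (wl d ! 1) * Yr 1 + Im (wl d ! 1) * Yi 1) + (Re (wl d ! 2) * Yr 2 + Im (wl d ! 2) * Yi 2) + (Re (wl d ! 3) * Yr 3 + Im (wl d ! 3) * Yi 3) + (Re (wl d ! 4) * Yr 4 + Im (wl d ! 4) * Yi 4) + (Re (wl d ! 5) * Yr 5 + Im (wl d ! 5) * Yi 5) + (Re (wl d ! 6) * Yr 6 + Im (wl d ! 6) * Yi 6) + (Re (wl d ! 7) * Yr 7 + Im (wl d ! 7) * Yi 7) + (Re (wl d ! 8) * Yr 8 + Im (wl d ! 8) * Yi 8) + (Re (wl d ! 9) * Yr 9 + Im (wl d ! 9) * Yi 9) + (Re (wl d ! 10) * Yr 10 + Im (wl d ! 10) * Yi 10) - 28.628029444333\<bar> \<le> 0.005366036385766" by (rule mr_add[OF n484 n466]) simp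
  have n486: "\<bar>(Re (wl d ! 0) * Yr 0 + Im (wl d ! 0) * Yi 0) + (Re (wl d ! 1) * Yr 1 + Im (wl d ! 1) * Yi 1) + (Re (wl d ! 2) * Yr 2 + Im (wl d ! 2) * Yi 2) + (Re (wl d ! 3) * Yr 3 + Im (wl d ! 3) * Yi 3) + (Re (wl d ! 4) * Yr 4 + Im (wl d ! 4) * Yi 4) + (Re (wl d ! 5) * Yr 5 + Im (wl d ! 5) * Yi 5) + (Re (wl d ! 6) * Yr 6 + Im (wl d ! 6) * Yi 6) + (Re (wl d ! 7) * Yr 7 + Im (wl d ! 7) * Yi 7) + (Re (wl d ! 8) * Yr 8 + Im (wl d ! 8) * Yi 8) + (Re (wl d ! 9) * Yr 9 + Im (wl d ! 9) * Yi 9) + (Re (wl d ! 10) * Yr 10 + Im (wl d ! 10) * Yi 10) + (Re (wl d ! 11) * Yr 11 + Im (wl d ! 11) * Yi 11) - 30.802186332398\<bar> \<le> 0.005839536309713" by (rule mr_add[OF n485 n469]) simp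
  have n487: "\<bar>(Re (wl d ! 0) * Yr 0 + Im (wl d ! 0) * Yi 0) + (Re (wl d ! 1) * Yr 1 + Im (wl d ! 1) * Yi 1) + (Re (wl d ! 2) * Yr 2 + Im (wl d ! 2) * Yi 2) + (Re (wl d ! 3) * Yr 3 + Im (wl d ! 3) * Yi 3) + (Re (wl d ! 4) * Yr 4 + Im (wl d ! 4) * Yi 4) + (Re (wl d ! 5) * Yr 5 + Im (wl d ! 5) * Yi 5) + (Re (wl d ! 6) * Yr 6 + Im (wl d ! 6) * Yi 6) + (Re (wl d ! 7) * Yr 7 + Im (wl d ! 7) * Yi 7) + (Re (wl d ! 8) * Yr 8 + Im (wl d ! 8) * Yi 8) + (Re (wl d ! 9) * Yr 9 + Im (wl d ! 9) * Yi 9) + (Re (wl d ! 10) * Yr 10 + Im (wl d ! 10) * Yi 10) + (Re (wl d ! 11) * Yr 11 + Im (wl d ! 11) * Yi 11) + (Re (wl d ! 12) * Yr 12 + Im (wl d ! 12) * Yi 12) - 32.976343220463\<bar> \<le> 0.006391332321953" by (rule mr_add[OF n486 n472]) simp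
  have n488: "\<bar>(Re (wl d ! 0) * Yr 0 + Im (wl d ! 0) * Yi 0) + (Re (wl d ! 1) * Yr 1 + Im (wl d ! 1) * Yi 1) + (Re (wl d ! 2) * Yr 2 + Im (wl d ! 2) * Yi 2) + (Re (wl d ! 3) * Yr 3 + Im (wl d ! 3) * Yi 3) + (Re (wl d ! 4) * Yr 4 + Im (wl d ! 4) * Yi 4) + (Re (wl d ! 5) * Yr 5 + Im (wl d ! 5) * Yi 5) + (Re (wl d ! 6) * Yr 6 + Im (wl d ! 6) * Yi 6) + (Re (wl d ! 7) * Yr 7 + Im (wl d ! 7) * Yi 7) + (Re (wl d ! 8) * Yr 8 + Im (wl d ! 8) * Yi 8) + (Re (wl d ! 9) * Yr 9 + Im (wl d ! 9) * Yi 9) + (Re (wl d ! 10) * Yr 10 + Im (wl d ! 10) * Yi 10) + (Re (wl d ! 11) * Yr 11 + Im (wl d ! 11) * Yi 11) + (Re (wl d ! 12) * Yr 12 + Im (wl d ! 12) * Yi 12) + (Re (wl d ! 13) * Yr 13 + Im (wl d ! 13) * Yi 13) - 35.150500108528\<bar> \<le> 0.006964731717222" by (rule mr_add[OF n487 n475]) simp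
  have "(\<Sum>i<14. Re (wl d ! i) * (\<Sum>j<14. real_of_int (G14l ! i ! j) * Re (wl d ! j)) +
                      Im (wl d ! i) * (\<Sum>j<14. real_of_int (G14l ! i ! j) * Im (wl d ! j))) =
        (\<Sum>i<14. Re (wl d ! i) * Yr i + Im (wl d ! i) * Yi i)" by (simp add: Yr_def Yi_def)
  also have "\<dots> = (Re (wl d ! 0) * Yr 0 + Im (wl d ! 0) * Yi 0) + (Re (wl d ! 1) * Yr 1 + Im (wl d ! 1) * Yi 1) + (Re (wl d ! 2) * Yr 2 + Im (wl d ! 2) * Yi 2) + (Re (wl d ! 3) * Yr 3 + Im (wl d ! 3) * Yi 3) + (Re (wl d ! 4) * Yr 4 + Im (wl d ! 4) * Yi 4) + (Re (wl d ! 5) * Yr 5 + Im (wl d ! 5) * Yi 5) + (Re (wl d ! 6) * Yr 6 + Im (wl d ! 6) * Yi 6) + (Re (wl d ! 7) * Yr 7 + Im (wl d ! 7) * Yi 7) + (Re (wl d ! 8) * Yr 8 + Im (wl d ! 8) * Yi 8) + (Re (wl d ! 9) * Yr 9 + Im (wl d ! 9) * Yi 9) + (Re (wl d ! 10) * Yr 10 + Im (wl d ! 10) * Yi 10) + (Re (wl d ! 11) * Yr 11 + Im (wl d ! 11) * Yi 11) + (Re (wl d ! 12) * Yr 12 + Im (wl d ! 12) * Yi 12) + (Re (wl d ! 13) * Yr 13 + Im (wl d ! 13) * Yi 13)"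
    by (simp only: sum14)
  finally have eqtot: "(\<Sum>i<14. Re (wl d ! i) * (\<Sum>j<14. real_of_int (G14l ! i ! j) * Re (wl d ! j)) +
                      Im (wl d ! i) * (\<Sum>j<14. real_of_int (G14l ! i ! j) * Im (wl d ! j))) = (Re (wl d ! 0) * Yr 0 + Im (wl d ! 0) * Yi 0) + (Re (wl d ! 1) * Yr 1 + Im (wl d ! 1) * Yi 1) + (Re (wl d ! 2) * Yr 2 + Im (wl d ! 2) * Yi 2) + (Re (wl d ! 3) * Yr 3 + Im (wl d ! 3) * Yi 3) + (Re (wl d ! 4) * Yr 4 + Im (wl d ! 4) * Yi 4) + (Re (wl d ! 5) * Yr 5 + Im (wl d ! 5) * Yi 5) + (Re (wl d ! 6) * Yr 6 + Im (wl d ! 6) * Yi 6) + (Re (wl d ! 7) * Yr 7 + Im (wl d ! 7) * Yi 7) + (Re (wl d ! 8) * Yr 8 + Im (wl d ! 8) * Yi 8) + (Re (wl d ! 9) * Yr 9 + Im (wl d ! 9) * Yi 9) + (Re (wl d ! 10) * Yr 10 + Im (wl d ! 10) * Yi 10) + (Re (wl d ! 11) * Yr 11 + Im (wl d ! 11) * Yi 11) + (Re (wl d ! 12) * Yr 12 + Im (wl d ! 12) * Yi 12) + (Re (wl d ! 13) * Yr 13 + Im (wl d ! 13) * Yi 13)" .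
  show ?thesis unfolding eqtot by (rule mr_pos[OF n488]) simp
qed


abbreviation "Fm \<equiv> mat_of_rows_list 22 Fl"
abbreviation "Km \<equiv> mat_of_rows_list 22 Kl"
abbreviation "Pm \<equiv> mat_of_rows_list 14 Pl"
abbreviation "Cm \<equiv> mat_of_rows_list 14 Cl"
abbreviation "Mm \<equiv> mat_of_rows_list 14 Ml"

lemma set_upt_ball: "(\<forall>i\<in>set [0..<n]. P i) \<longleftrightarrow> (\<forall>i<n. P i)" by auto

lemma K_eq: "K3_gram = Km"
  using chk_K wf_all(1) unfolding set_upt_ball
  by (intro eq_matI) (auto simp: K3_gram_def mat_of_rows_list_def wfl_def)

lemma F_carrier: "Fm \<in> carrier_mat 22 22" using wf_all(2) by (rule mat_of_rows_list_carrier)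

lemma F_aut: "K3_aut Fm"
proof -
  have inv1: "Fm * mat_of_rows_list 22 Finvl = 1\<^sub>m 22"
    by (simp add: mult_bridge[OF wf_all(2) wf_all(3)] chk_inv id_bridge)
  have inv2: "mat_of_rows_list 22 Finvl * Fm = 1\<^sub>m 22"
    by (simp add: mult_bridge[OF wf_all(3) wf_all(2)] chk_inv id_bridge)
  have "invertible_mat Fm"
    unfolding invertible_mat_def inverts_mat_def using inv1 inv2 F_carrier wf_all(3)
    by (auto simp: square_mat.simps wfl_def intro!: exI[of _ "mat_of_rows_list 22 Finvl"]
        simp: mat_of_rows_list_def)
  moreover have "transpose_mat Fm * K3_gram * Fm = K3_gram"
  proof -
    have wT: "wfl 22 22 (List.transpose Fl)" by (rule wfl_transpose[OF wf_all(2)]) simp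
    have "transpose_mat Fm * K3_gram * Fm = mat_of_rows_list 22 (List.transpose Fl) * Km * Fm"
      by (simp add: K_eq transpose_bridge[OF wf_all(2)])
    also have "\<dots> = mat_of_rows_list 22 (mmul (mmul (List.transpose Fl) Kl) Fl)"
      by (simp add: mult_bridge[OF wT wf_all(1)] mult_bridge[OF wfl_mmul[OF wT wf_all(1)] wf_all(2)])
    finally show ?thesis by (simp add: chk_iso K_eq)
  qed
  ultimately show ?thesis unfolding K3_aut_def using F_carrier by simp
qed



lemma coeff_phi14: "coeff phi14 = nth_default 0 [1, 0, 0, - 1, - 1, 0, 0, 1, 0, 0, - 1, - 1, 0, 0, 1]"
  by (simp only: phi14_def coeff_Poly_eq)

lemma sum_delta_mult: "(\<Sum>i<(m::nat). (f i::int) * (if i = n then 1 else 0)) = (if n < m then f n else 0)"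
  by (induction m) (auto simp: less_Suc_eq)

lemma charC: "char_poly Cm = phi14"
proof -
  let ?c = "\<lambda>i. coeff phi14 i"
  have "char_poly_matrix Cm = Xm 14 ?c"
    using chk_C wf_all(7) unfolding set_upt_ball
    by (intro eq_matI) (auto simp: char_poly_matrix_def Xm_def mat_of_rows_list_def wfl_def coeff_phi14)
  hence "char_poly Cm = [:0,1:]^14 + (\<Sum>i<14. [:?c i:] * [:0,1:]^i)"
    by (simp add: char_poly_def det_Xm)
  also have "\<dots> = phi14"
  proof (rule poly_eqI)
    fix n
    have x: "[:0,1:]^k = monom (1::int) k" for k :: nat using monom_altdef[of "1::int" k] by simp
    have y: "[:a:] * [:0,1:]^k = monom a k" for a :: int and k using monom_altdef[of a k] by simp
    have "coeff ([:0,1:]^14 + (\<Sum>i<14. [:?c i:] * [:0,1:]^i)) n = 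
       (if n = 14 then 1 else 0) + (if n < 14 then ?c n else 0)"
      by (simp add: x y coeff_sum sum_delta_mult)
    also have "\<dots> = ?c n"
      unfolding coeff_phi14 by (auto simp: nth_default_def)
    finally show "coeff ([:0,1:]^14 + (\<Sum>i<14. [:?c i:] * [:0,1:]^i)) n = coeff phi14 n" .
  qed
  finally show ?thesis .
qed

lemma F_block: "Fm = four_block_mat (1\<^sub>m 8) (0\<^sub>m 8 14) (0\<^sub>m 14 8) Mm"
  using chk_Fb wf_all(2) wf_all(4) unfolding set_upt_ball
  by (intro eq_matI) (auto simp: mat_of_rows_list_def wfl_def four_block_mat_def)

lemma charF: "char_poly Fm = [:-1, 1:] ^ 8 * phi14"
proof -
  have M: "Mm \<in> carrier_mat 14 14" by (rule mat_of_rows_list_carrier[OF wf_all(4)])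
  have wBC: "wfl 14 14 (mmul Binvl Cl)" by (rule wfl_mmul[OF wf_all(6) wf_all(7)]) simp
  have simw: "similar_mat_wit Mm Cm (mat_of_rows_list 14 Binvl) (mat_of_rows_list 14 Bl)"
    unfolding similar_mat_wit_def
      using wf_all(4-7) mat_of_rows_list_carrier[OF wf_all(4)] mat_of_rows_list_carrier[OF wf_all(5)]
        mat_of_rows_list_carrier[OF wf_all(6)] mat_of_rows_list_carrier[OF wf_all(7)]
      by (simp add: Let_def mult_bridge[OF wf_all(6) wf_all(7)] mult_bridge[OF wBC wf_all(5)]
          mult_bridge[OF wf_all(6) wf_all(5)] mult_bridge[OF wf_all(5) wf_all(6)]
          chk_sim id_bridge wfl_def[of 14 14 Ml])
  have sim: "similar_mat Mm Cm" unfolding similar_mat_def using simw by blast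
  have "char_poly Fm = char_poly (1\<^sub>m 8 :: int mat) * char_poly Mm"
    unfolding F_block by (rule char_poly_blockdiag[OF _ M]) simp
  also have "char_poly Mm = char_poly Cm" by (rule char_poly_similar[OF sim])
  finally show ?thesis by (simp add: char_poly_one charC)
qed



lemma phi_eq: assumes "poly (map_poly of_int phi14) (d::complex) = 0"
  shows "d^14 - d^11 - d^10 + d^7 - d^4 - d^3 + 1 = 0"
proof -
  have "poly (map_poly of_int phi14) d = d^14 - d^11 - d^10 + d^7 - d^4 - d^3 + 1"
    by (simp add: phi14_def algebra_simps eval_nat_numeral)
  with assms show ?thesis by simp
qed

lemma Cw_rows: assumes "d^14 - d^11 - d^10 + d^7 - d^4 - d^3 + 1 = (0::complex)"
  shows "\<forall>i\<in>set [0..<14]. (\<Sum>j<14. of_int (Cl ! i ! j) * wl d ! j) = d * wl d ! i"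
  using assms by (simp add: lessThan_nat_numeral Cl_def wl_def algebra_simps eval_nat_numeral)


abbreviation "wv d \<equiv> vec_of_list (wl d)"

lemma len_wl: "length (wl d) = 14" by (simp add: wl_def)

lemma wv_carrier: "wv d \<in> carrier_vec 14" by (simp only: carrier_vec_def mem_Collect_eq dim_vec_of_list len_wl)

lemma map_of_int_mult: "A \<in> carrier_mat n k \<Longrightarrow> B \<in> carrier_mat k m \<Longrightarrow>
  map_mat (of_int :: int \<Rightarrow> complex) (A * B) = map_mat of_int A * map_mat of_int B"
  by (rule of_int_hom.mat_hom_mult)

lemma Cw: assumes "poly (map_poly of_int phi14) d = 0"
  shows "map_mat (of_int :: int \<Rightarrow> complex) Cm *\<^sub>v wv d = d \<cdot>\<^sub>v wv d"
proof (rule eq_vecI)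
  have rows: "\<forall>i\<in>set [0..<14]. (\<Sum>j<14. of_int (Cl ! i ! j) * wl d ! j) = d * wl d ! i"
    by (rule Cw_rows[OF phi_eq[OF assms]])
  show "dim_vec (map_mat of_int Cm *\<^sub>v wv d) = dim_vec (d \<cdot>\<^sub>v wv d)"
    using wf_all(7) by (simp add: mat_of_rows_list_def wfl_def len_wl)
  fix i assume "i < dim_vec (d \<cdot>\<^sub>v wv d)"
  hence i: "i < 14" by (simp add: len_wl)
  have "(map_mat of_int Cm *\<^sub>v wv d) $ i = (\<Sum>j<14. of_int (Cl ! i ! j) * wl d ! j)"
    using wf_all(7) i by (simp add: mat_of_rows_list_def wfl_def len_wl vec_of_list_index mult_mat_vec_def scalar_prod_def
        atLeast0LessThan row_def)
  also have "\<dots> = d * wl d ! i" using rows i by simp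
  finally show "(map_mat of_int Cm *\<^sub>v wv d) $ i = (d \<cdot>\<^sub>v wv d) $ i" using i by (simp add: len_wl vec_of_list_index)
qed

lemma P_carrier: "Pm \<in> carrier_mat 22 14" by (rule mat_of_rows_list_carrier[OF wf_all(8)])
lemma C_carrier: "Cm \<in> carrier_mat 14 14" by (rule mat_of_rows_list_carrier[OF wf_all(7)])
lemma K_carrier: "Km \<in> carrier_mat 22 22" by (rule mat_of_rows_list_carrier[OF wf_all(1)])

lemma eig: assumes "poly (map_poly of_int phi14) d = 0"
  shows "map_mat of_int Fm *\<^sub>v (map_mat of_int Pm *\<^sub>v wv d) = d \<cdot>\<^sub>v (map_mat of_int Pm *\<^sub>v wv d)"
proof -
  have FP: "Fm * Pm = Pm * Cm"
    by (simp add: mult_bridge[OF wf_all(2) wf_all(8)] mult_bridge[OF wf_all(8) wf_all(7)] chk_FP)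
  have "map_mat of_int Fm *\<^sub>v (map_mat of_int Pm *\<^sub>v wv d) = (map_mat of_int Fm * map_mat of_int Pm) *\<^sub>v wv d"
    using F_carrier P_carrier wv_carrier by (simp add: assoc_mult_mat_vec[of _ 22 22 _ 14])
  also have "map_mat of_int Fm * map_mat of_int Pm = map_mat (of_int :: int \<Rightarrow> complex) (Fm * Pm)"
    using F_carrier P_carrier by (simp add: map_of_int_mult)
  also have "\<dots> = map_mat of_int Pm * map_mat of_int Cm"
    unfolding FP using P_carrier C_carrier by (simp add: map_of_int_mult)
  also have "(map_mat of_int Pm * map_mat of_int Cm) *\<^sub>v wv d = map_mat of_int Pm *\<^sub>v (map_mat of_int Cm *\<^sub>v wv d)"
    using P_carrier C_carrier wv_carrier by (simp add: assoc_mult_mat_vec[of _ 22 14 _ 14])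
  also have "\<dots> = map_mat of_int Pm *\<^sub>v (d \<cdot>\<^sub>v wv d)" by (simp add: Cw[OF assms])
  also have "\<dots> = d \<cdot>\<^sub>v (map_mat of_int Pm *\<^sub>v wv d)"
    using P_carrier wv_carrier by (simp add: mult_mat_vec[of _ 22 14])
  finally show ?thesis .
qed

lemma herm: "K3_formC (map_mat of_int Pm *\<^sub>v wv d) (map_vec cnj (map_mat of_int Pm *\<^sub>v wv d)) =
   wv d \<bullet> (map_mat of_int (mat_of_rows_list 14 G14l) *\<^sub>v map_vec cnj (wv d))"
proof -
  let ?P = "map_mat (of_int :: int \<Rightarrow> complex) Pm" and ?K = "map_mat (of_int :: int \<Rightarrow> complex) Km"
  let ?w = "wv d" and ?v = "map_vec cnj (wv d)"
  have Pc: "?P \<in> carrier_mat 22 14" using P_carrier by simp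
  have Kc: "?K \<in> carrier_mat 22 22" using K_carrier by simp
  have v: "?v \<in> carrier_vec 14" using wv_carrier by simp
  have wT: "wfl 14 22 (List.transpose Pl)" by (rule wfl_transpose[OF wf_all(8)]) simp
  have wKP: "wfl 22 14 (mmul Kl Pl)" by (rule wfl_mmul[OF wf_all(1) wf_all(8)]) simp
  have G: "transpose_mat Pm * (Km * Pm) = mat_of_rows_list 14 G14l"
    by (simp add: transpose_bridge[OF wf_all(8)] mult_bridge[OF wf_all(1) wf_all(8)]
        mult_bridge[OF wT wKP] chk_G)
  have e1: "K3_formC (?P *\<^sub>v ?w) (map_vec cnj (?P *\<^sub>v ?w)) = (?P *\<^sub>v ?w) \<bullet> (?K *\<^sub>v (?P *\<^sub>v ?v))"
    unfolding K3_formC_def K_eq using cnj_mult_mat_vec[OF P_carrier wv_carrier] by simp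
  have e2: "?K *\<^sub>v (?P *\<^sub>v ?v) = (?K * ?P) *\<^sub>v ?v"
    using Kc Pc v by (simp add: assoc_mult_mat_vec[of _ 22 22 _ 14])
  have e3: "(?P *\<^sub>v ?w) \<bullet> ((?K * ?P) *\<^sub>v ?v) = ?w \<bullet> (transpose_mat ?P *\<^sub>v ((?K * ?P) *\<^sub>v ?v))"
    using transpose_vec_mult_scalar[of "transpose_mat ?P" 14 22 "(?K * ?P) *\<^sub>v ?v" ?w] Pc Kc v wv_carrier
    by simp
  have e4: "transpose_mat ?P *\<^sub>v ((?K * ?P) *\<^sub>v ?v) = (transpose_mat ?P * (?K * ?P)) *\<^sub>v ?v"
    using Kc Pc v by (simp add: assoc_mult_mat_vec[of _ 14 22 _ 14])
  have e5: "transpose_mat ?P * (?K * ?P) = map_mat of_int (transpose_mat Pm * (Km * Pm))"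
    using P_carrier K_carrier by (simp add: map_of_int_mult[of _ 14 22 _ 14] map_of_int_mult[of _ 22 22 _ 14] map_mat_transpose)
  show ?thesis by (simp only: e1 e2 e3 e4 e5 G)
qed



lemma G_carrier: "mat_of_rows_list 14 G14l \<in> carrier_mat 14 14" by (rule mat_of_rows_list_carrier[OF wf_all(9)])

lemma G_entry: "i < 14 \<Longrightarrow> j < 14 \<Longrightarrow> mat_of_rows_list 14 G14l $$ (i,j) = G14l ! i ! j"
  using wf_all(9) by (simp add: mat_of_rows_list_def wfl_def)

theorem proposition3p1:
  fixes \<delta> :: complex
  assumes "poly (map_poly of_int phi14) \<delta> = 0"
    and "cmod (\<delta> - Complex (-0.9903988352300419) (-0.13823945592693967)) < 1 / 10^6"
  shows "\<exists>F :: int mat. \<exists>\<sigma> :: complex vec.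
           K3_aut F \<and>
           char_poly F = [:-1, 1:] ^ 8 * phi14 \<and>
           \<sigma> \<in> carrier_vec 22 \<and>
           K3_formC \<sigma> \<sigma> = 0 \<and>
           K3_formC \<sigma> (map_vec cnj \<sigma>) \<in> \<real> \<and> Re (K3_formC \<sigma> (map_vec cnj \<sigma>)) > 0 \<and>
           map_mat of_int F *\<^sub>v \<sigma> = \<delta> \<cdot>\<^sub>v \<sigma>"
proof (intro exI conjI)
  let ?s = "map_mat (of_int :: int \<Rightarrow> complex) Pm *\<^sub>v wv \<delta>"
  let ?G = "mat_of_rows_list 14 G14l"
  show "K3_aut Fm" by (rule F_aut)
  show "char_poly Fm = [:-1, 1:] ^ 8 * phi14" by (rule charF)
  show sc: "?s \<in> carrier_vec 22" using P_carrier wv_carrier by simp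
  show ev: "map_mat of_int Fm *\<^sub>v ?s = \<delta> \<cdot>\<^sub>v ?s" by (rule eig[OF assms(1)])
  have d2: "\<delta>^2 \<noteq> 1"
  proof
    assume "\<delta>^2 = 1"
    hence "\<delta> = 1 \<or> \<delta> = -1" by (simp add: power2_eq_1_iff)
    thus False
    proof
      assume "\<delta> = 1"
      thus False using abs_Re_le_cmod[of "\<delta> - Complex (-0.9903988352300419) (-0.13823945592693967)"] assms(2)
        by simp
    next
      assume "\<delta> = -1"
      thus False using abs_Im_le_cmod[of "\<delta> - Complex (-0.9903988352300419) (-0.13823945592693967)"] assms(2)
        by simp
    qed
  qed
  have Kc: "K3_gram \<in> carrier_mat 22 22" using K_carrier K_eq by simp
  have iso: "transpose_mat (map_mat (of_int :: int \<Rightarrow> complex) Fm) * map_mat of_int K3_gram * map_mat of_int Fm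
      = map_mat of_int K3_gram"
  proof -
    have "transpose_mat Fm * K3_gram * Fm = K3_gram" using F_aut by (simp add: K3_aut_def)
    hence "map_mat (of_int :: int \<Rightarrow> complex) (transpose_mat Fm * K3_gram * Fm) = map_mat of_int K3_gram" by simp
    thus ?thesis using F_carrier Kc
      by (simp add: map_of_int_mult[of _ 22 22 _ 22] map_mat_transpose)
  qed
  show "K3_formC ?s ?s = 0"
    unfolding K3_formC_def
    by (rule isotropic[of _ 22, OF _ _ sc iso ev d2]) (use F_carrier Kc in simp_all)
  have h: "K3_formC ?s (map_vec cnj ?s) = wv \<delta> \<bullet> (map_mat of_int ?G *\<^sub>v map_vec cnj (wv \<delta>))"
    by (rule herm)
  have "Im (K3_formC ?s (map_vec cnj ?s)) = 0"
    unfolding h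
    by (rule form_im[OF wv_carrier G_carrier]) (use chk_Gsym in \<open>simp add: G_entry set_upt_ball\<close>)
  thus "K3_formC ?s (map_vec cnj ?s) \<in> \<real>" by (simp add: complex_is_Real_iff)
  have "Re (K3_formC ?s (map_vec cnj ?s)) =
     (\<Sum>i<14. \<Sum>j<14. of_int (?G $$ (i,j)) * (Re (wv \<delta> $ i) * Re (wv \<delta> $ j) + Im (wv \<delta> $ i) * Im (wv \<delta> $ j)))"
    unfolding h by (rule form_re[OF wv_carrier G_carrier])
  also have "\<dots> = (\<Sum>i<14. Re (wl \<delta> ! i) * (\<Sum>j<14. real_of_int (G14l ! i ! j) * Re (wl \<delta> ! j)) +
                      Im (wl \<delta> ! i) * (\<Sum>j<14. real_of_int (G14l ! i ! j) * Im (wl \<delta> ! j)))"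
    by (intro sum.cong refl) (simp add: G_entry vec_of_list_index sum_distrib_left sum.distrib algebra_simps)
  finally show "Re (K3_formC ?s (map_vec cnj ?s)) > 0" using numeric[OF assms(2)] by simp
qed


end
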